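(* Let $A$ be a $C^*$-algebra, $X$ a full Hilbert $A$-module, $H,K$ Hilbert spaces, $\Phi\in\mathcal{C}(X,L(H,K))$, with Stinespring construction $(\pi_\Phi,H_\Phi,K_\Phi,V_\Phi,W_\Phi)$. Then: (1) $\Phi_I=\Phi$; (2) if $T\oplus S\in\pi_\Phi(X)'$ with $T\oplus S\geq 0$ and $\lambda>0$, then $\Phi_{\lambda T}=\lambda\Phi_T$; (3) if $T_1\oplus S_1,\ T_2\oplus S_2\in\pi_\Phi(X)'$ and $0\leq T_1\leq T_2$, then $\Phi_{\sqrt{T_1}}\curlyeqprec\Phi_{\sqrt{T_2}}$.
   Context: A Hilbert $A$-module $X$ is a right $A$-module with an $A$-valued inner product $\langle\cdot,\cdot\rangle$ (conjugate linear in the first and $A$-linear in the second variable), complete in the norm $\|x\|=\|\langle x,x\rangle\|^{1/2}$; it is full if the closed two-sided ideal generated by $\{\langle x,y\rangle\}$ is $A$. A map $\Phi:X\to L(H,K)$ is completely positive if there is a completely positive map $\varphi:A\to L(H)$ with $\Phi(x)^*\Phi(y)=\varphi(\langle x,y\rangle)$ for all $x,y\in X$; $\mathcal{C}(X,L(H,K))$ is the set of such maps. For $\Phi,\Psi\in\mathcal{C}(X,L(H,K))$ write $\Phi\curlyeqprec\Psi$ if $\Phi(x)^*\Phi(x)\leq\Psi(x)^*\Psi(x)$ for all $x\in X$. $[Y]$ denotes closed linear span and $p_M$ orthogonal projection onto $M$. A representation of $X$ on $H',K'$ is a map $\pi:X\to L(H',K')$ with a $*$-representation $\pi_A$ of $A$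 on $H'$ such that $\pi(x)^*\pi(y)=\pi_A(\langle x,y\rangle)$. The Stinespring construction of $\Phi$ (with associated $\varphi$) is $(\pi_\Phi,H_\Phi,K_\Phi,V_\Phi,W_\Phi)$ where: $\pi_\varphi$ is a $*$-representation of $A$ on $H_\Phi$, $V_\Phi\in L(H,H_\Phi)$, $\varphi(a)=V_\Phi^*\pi_\varphi(a)V_\Phi$, $[\pi_\varphi(A)V_\Phi H]=H_\Phi$; $K_\Phi=[\Phi(X)H]\subseteq K$; $\pi_\Phi:X\to L(H_\Phi,K_\Phi)$ is the representation with underlying $*$-representation $\pi_\varphi$ determined by $\pi_\Phi(x)\pi_\varphi(a)V_\Phi h=\Phi(xa)h$; $W_\Phi\in L(K,K_\Phi)$ is the coisometry $W_\Phi k=p_{K_\Phi}k$; then $\Phi(x)=W_\Phi^*\pi_\Phi(x)V_\Phi$. The commutant is the $C^*$-algebra $\pi_\Phi(X)'=\{T\oplus S\in L(H_\Phi\oplus K_\Phi):\pi_\Phi(x)T=S\pi_\Phi(x),\ \pi_\Phi(x)^*S=T\pi_\Phi(x)^*\ \forall x\}$. Since $\pi_\Phi$ is non-degenerate, an element $T\oplus S\in\pi_\Phi(X)'$ is uniquely determined by $T$, and $T\oplus S\ge0$ whenever $T\ge 0$. For a positive $T\oplus S\in\pi_\Phi(X)'$ one defines $\Phi_T:X\to L(H,K)$ by $\Phi_T(x)=W_\Phi^*\sqrt{S}\,\pi_\Phi(x)\sqrt{T}\,V_\Phi$ (this is completely positive); $\Phi_{\sqrt{T}}$ refers to the positive element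 $\sqrt{T}\oplus\sqrt{S}$ of $\pi_\Phi(X)'$, and $I$ denotes $I\oplus I$. *)

theory Defs
  imports "HOL-Analysis.Analysis"
begin

class complex_vector = real_vector +
  fixes scaleC :: "complex \<Rightarrow> 'a \<Rightarrow> 'a" (infixr \<open>*\<^sub>C\<close> 75)
  assumes scaleC_add_right: "a *\<^sub>C (x + y) = a *\<^sub>C x + a *\<^sub>C y"
    and scaleC_add_left: "(a + b) *\<^sub>C x = a *\<^sub>C x + b *\<^sub>C x"
    and scaleC_scaleC: "a *\<^sub>C (b *\<^sub>C x) = (a * b) *\<^sub>C x"
    and scaleC_one: "1 *\<^sub>C x = x"
    and scaleR_scaleC: "scaleR r x = complex_of_real r *\<^sub>C x"

class complex_normed_vector = complex_vector + real_normed_vector +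
  assumes norm_scaleC: "norm (a *\<^sub>C x) = cmod a * norm x"

class complex_inner = complex_normed_vector +
  fixes cinner :: "'a \<Rightarrow> 'a \<Rightarrow> complex"
  assumes cinner_commute: "cinner x y = cnj (cinner y x)"
    and cinner_add_left: "cinner (x + y) z = cinner x z + cinner y z"
    and cinner_scaleC_left: "cinner (r *\<^sub>C x) y = cnj r * cinner x y"
    and cinner_ge_zero: "Im (cinner x x) = 0 \<and> 0 \<le> Re (cinner x x)"
    and cinner_eq_zero_iff: "cinner x x = 0 \<longleftrightarrow> x = 0"
    and norm_eq_sqrt_cinner: "norm x = sqrt (Re (cinner x x))"

class chilbert_space = complex_inner + complete_space

definition bounded_clinear :: "('a::complex_normed_vector \<Rightarrow> 'b::complex_normed_vector) \<Rightarrow> bool" where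
  "bounded_clinear f \<longleftrightarrow> bounded_linear f \<and> (\<forall>c x. f (c *\<^sub>C x) = c *\<^sub>C f x)"

definition cadj :: "('a::complex_inner \<Rightarrow> 'b::complex_inner) \<Rightarrow> 'b \<Rightarrow> 'a" where
  "cadj f = (SOME g. \<forall>x y. cinner (f x) y = cinner x (g y))"

definition nonneg_complex :: "complex \<Rightarrow> bool" where
  "nonneg_complex z \<longleftrightarrow> Im z = 0 \<and> 0 \<le> Re z"

definition positive_op :: "('a::complex_inner \<Rightarrow> 'a) \<Rightarrow> bool" where
  "positive_op T \<longleftrightarrow> bounded_clinear T \<and> (\<forall>x. nonneg_complex (cinner x (T x)))"

definition op_le :: "('a::complex_inner \<Rightarrow> 'a) \<Rightarrow> ('a \<Rightarrow> 'a) \<Rightarrow> bool" where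
  "op_le A B \<longleftrightarrow> bounded_clinear A \<and> bounded_clinear B \<and> positive_op (\<lambda>x. B x - A x)"

definition op_sqrt :: "('a::complex_inner \<Rightarrow> 'a) \<Rightarrow> 'a \<Rightarrow> 'a" where
  "op_sqrt T = (THE R. positive_op R \<and> R \<circ> R = T)"

definition cspan :: "'a::complex_vector set \<Rightarrow> 'a set" where
  "cspan S = {y. \<exists>F c. finite F \<and> F \<subseteq> S \<and> y = (\<Sum>v\<in>F. c v *\<^sub>C v)}"

definition is_orth_proj :: "'a::complex_inner set \<Rightarrow> 'a \<Rightarrow> 'a \<Rightarrow> bool" where
  "is_orth_proj M k m \<longleftrightarrow> m \<in> M \<and> (\<forall>u\<in>M. cinner u (k - m) = 0)"

class cstar_algebra = complex_normed_vector + real_normed_algebra + complete_space +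
  fixes cstar :: "'a \<Rightarrow> 'a"
  assumes mult_scaleC_left: "(c *\<^sub>C x) * y = c *\<^sub>C (x * y)"
    and mult_scaleC_right: "x * (c *\<^sub>C y) = c *\<^sub>C (x * y)"
    and cstar_cstar: "cstar (cstar x) = x"
    and cstar_add: "cstar (x + y) = cstar x + cstar y"
    and cstar_scaleC: "cstar (c *\<^sub>C x) = cnj c *\<^sub>C cstar x"
    and cstar_mult: "cstar (x * y) = cstar y * cstar x"
    and cstar_identity: "norm (cstar x * x) = (norm x)\<^sup>2"

definition cstar_pos :: "'a::cstar_algebra \<Rightarrow> bool" where
  "cstar_pos a \<longleftrightarrow> (\<exists>b. a = cstar b * b)"

definition closed_ideal :: "'a::cstar_algebra set \<Rightarrow> bool" where
  "closed_ideal I \<longleftrightarrow> 0 \<in> I \<and> (\<forall>a\<in>I. \<forall>b\<in>I. a + b \<in> I) \<and> (\<forall>c. \<forall>a\<in>I. c *\<^sub>C a \<in> I)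
     \<and> (\<forall>a\<in>I. \<forall>b. a * b \<in> I \<and> b * a \<in> I) \<and> closed I"

definition hilbert_module ::
  "('x::{complex_normed_vector,complete_space} \<Rightarrow> 'a::cstar_algebra \<Rightarrow> 'x) \<Rightarrow> ('x \<Rightarrow> 'x \<Rightarrow> 'a) \<Rightarrow> bool" where
  "hilbert_module act ip \<longleftrightarrow>
     (\<forall>x y a. act (x + y) a = act x a + act y a)
   \<and> (\<forall>x a b. act x (a + b) = act x a + act x b)
   \<and> (\<forall>x a b. act (act x a) b = act x (a * b))
   \<and> (\<forall>x a c. act (c *\<^sub>C x) a = c *\<^sub>C act x a)
   \<and> (\<forall>x a c. act x (c *\<^sub>C a) = c *\<^sub>C act x a)
   \<and> (\<forall>x y z. ip x (y + z) = ip x y + ip x z)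
   \<and> (\<forall>x y c. ip x (c *\<^sub>C y) = c *\<^sub>C ip x y)
   \<and> (\<forall>x y a. ip x (act y a) = ip x y * a)
   \<and> (\<forall>x y. ip y x = cstar (ip x y))
   \<and> (\<forall>x. cstar_pos (ip x x))
   \<and> (\<forall>x. ip x x = 0 \<longrightarrow> x = 0)
   \<and> (\<forall>x. norm x = sqrt (norm (ip x x)))"

definition full_module :: "('x \<Rightarrow> 'x \<Rightarrow> 'a::cstar_algebra) \<Rightarrow> bool" where
  "full_module ip \<longleftrightarrow> (\<forall>I. closed_ideal I \<and> (\<forall>x y. ip x y \<in> I) \<longrightarrow> I = UNIV)"

definition cp_map :: "('a::cstar_algebra \<Rightarrow> 'h::chilbert_space \<Rightarrow> 'h) \<Rightarrow> bool" where
  "cp_map \<phi> \<longleftrightarrow> (\<forall>a. bounded_clinear (\<phi> a))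
    \<and> (\<forall>a b h. \<phi> (a + b) h = \<phi> a h + \<phi> b h)
    \<and> (\<forall>c a h. \<phi> (c *\<^sub>C a) h = c *\<^sub>C \<phi> a h)
    \<and> (\<forall>(n::nat) (B::nat \<Rightarrow> nat \<Rightarrow> 'a) (\<xi>::nat \<Rightarrow> 'h).
         nonneg_complex (\<Sum>i<n. \<Sum>j<n. cinner (\<xi> i) (\<phi> (\<Sum>k<n. cstar (B k i) * B k j) (\<xi> j))))"

definition star_rep :: "('a::cstar_algebra \<Rightarrow> 'h::chilbert_space \<Rightarrow> 'h) \<Rightarrow> bool" where
  "star_rep \<pi> \<longleftrightarrow> (\<forall>a. bounded_clinear (\<pi> a))
    \<and> (\<forall>a b h. \<pi> (a + b) h = \<pi> a h + \<pi> b h)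
    \<and> (\<forall>c a h. \<pi> (c *\<^sub>C a) h = c *\<^sub>C \<pi> a h)
    \<and> (\<forall>a b. \<pi> (a * b) = \<pi> a \<circ> \<pi> b)
    \<and> (\<forall>a. \<pi> (cstar a) = cadj (\<pi> a))"

definition module_rep ::
  "('x \<Rightarrow> 'x \<Rightarrow> 'a::cstar_algebra) \<Rightarrow> ('x \<Rightarrow> 'h::chilbert_space \<Rightarrow> 'k::chilbert_space) \<Rightarrow> ('a \<Rightarrow> 'h \<Rightarrow> 'h) \<Rightarrow> bool" where
  "module_rep ip \<pi> \<pi>A \<longleftrightarrow> star_rep \<pi>A \<and> (\<forall>x. bounded_clinear (\<pi> x))
     \<and> (\<forall>x y. cadj (\<pi> x) \<circ> \<pi> y = \<pi>A (ip x y))"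

text \<open>\<open>T \<oplus> S \<in> \<pi>_\<Phi>(X)'\<close>.\<close>
definition in_commutant ::
  "('x \<Rightarrow> 'hp::chilbert_space \<Rightarrow> 'kp::chilbert_space) \<Rightarrow> ('hp \<Rightarrow> 'hp) \<Rightarrow> ('kp \<Rightarrow> 'kp) \<Rightarrow> bool" where
  "in_commutant \<pi> T S \<longleftrightarrow> bounded_clinear T \<and> bounded_clinear S
     \<and> (\<forall>x. \<pi> x \<circ> T = S \<circ> \<pi> x \<and> cadj (\<pi> x) \<circ> S = T \<circ> cadj (\<pi> x))"

definition Phi_op ::
  "('k::chilbert_space \<Rightarrow> 'kp::chilbert_space) \<Rightarrow> ('h::chilbert_space \<Rightarrow> 'hp::chilbert_space)
   \<Rightarrow> ('x \<Rightarrow> 'hp \<Rightarrow> 'kp) \<Rightarrow> ('hp \<Rightarrow> 'hp) \<Rightarrow> ('kp \<Rightarrow> 'kp) \<Rightarrow> 'x \<Rightarrow> 'h \<Rightarrow> 'k" where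
  "Phi_op W V \<pi> T S x = cadj W \<circ> op_sqrt S \<circ> \<pi> x \<circ> op_sqrt T \<circ> V"

end

theory Submission
  imports Defs
begin

instance chilbert_space \<subseteq> banach ..


lemma scaleC_zero_left [simp]: "(0::complex) *\<^sub>C (x::'a::complex_vector) = 0"
  using scaleR_scaleC[of 0 x] by simp

lemma scaleC_zero_right [simp]: "c *\<^sub>C (0::'a::complex_vector) = 0"
proof -
  have "c *\<^sub>C (0::'a) = c *\<^sub>C 0 + c *\<^sub>C 0" using scaleC_add_right[of c "0::'a" 0] by simp
  then show ?thesis by simp
qed

lemma scaleC_minus_right: "c *\<^sub>C (- x) = - (c *\<^sub>C (x::'a::complex_vector))"
proof -
  have "c *\<^sub>C (- x) + c *\<^sub>C x = 0" using scaleC_add_right[of c "-x" x] by simp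
  then show ?thesis by (simp add: eq_neg_iff_add_eq_0)
qed

lemma scaleC_diff_right: "c *\<^sub>C (x - y) = c *\<^sub>C x - c *\<^sub>C (y::'a::complex_vector)"
  using scaleC_add_right[of c x "-y"] scaleC_minus_right[of c y] by simp

lemma scaleC_minus_left: "(- c) *\<^sub>C x = - (c *\<^sub>C (x::'a::complex_vector))"
proof -
  have "(- c) *\<^sub>C x + c *\<^sub>C x = 0" using scaleC_add_left[of "-c" c x] by simp
  then show ?thesis by (simp add: eq_neg_iff_add_eq_0)
qed

lemma scaleC_diff_left: "(a - b) *\<^sub>C x = a *\<^sub>C x - b *\<^sub>C (x::'a::complex_vector)"
  using scaleC_add_left[of a "-b" x] scaleC_minus_left[of b x] by simp

lemma scaleC_of_real: "complex_of_real r *\<^sub>C x = r *\<^sub>R (x::'a::complex_vector)"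
  by (simp add: scaleR_scaleC)

lemma scaleC_scaleR_comm: "c *\<^sub>C (r *\<^sub>R x) = r *\<^sub>R (c *\<^sub>C (x::'a::complex_vector))"
  by (simp add: scaleR_scaleC scaleC_scaleC mult.commute)

lemma scaleC_sum_right: "c *\<^sub>C (sum f A) = (\<Sum>a\<in>A. c *\<^sub>C (f a::'a::complex_vector))"
  by (induction A rule: infinite_finite_induct) (auto simp: scaleC_add_right)

lemma scaleC_one' [simp]: "1 *\<^sub>C x = (x::'a::complex_vector)"
  by (rule scaleC_one)

lemma bounded_linear_scaleC: "bounded_linear (\<lambda>x::'a::complex_normed_vector. c *\<^sub>C x)"
proof (rule bounded_linear_intro[where K="cmod c"])
  show "\<And>x y. c *\<^sub>C (x + y) = c *\<^sub>C x + c *\<^sub>C y" by (rule scaleC_add_right)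
  show "\<And>r x. c *\<^sub>C (r *\<^sub>R x) = r *\<^sub>R (c *\<^sub>C x)" by (rule scaleC_scaleR_comm)
  fix x :: 'a
  show "norm (c *\<^sub>C x) \<le> norm x * cmod c"
    using complex_normed_vector_class.norm_scaleC[of c x] by (simp add: mult.commute)
qed

lemma cinner_add_right: "cinner x (y + z) = cinner x y + cinner x (z::'a::complex_inner)"
  by (metis cinner_commute cinner_add_left complex_cnj_add)

lemma cinner_scaleC_right: "cinner x (c *\<^sub>C y) = c * cinner x (y::'a::complex_inner)"
  by (metis cinner_commute cinner_scaleC_left complex_cnj_cnj complex_cnj_mult)

lemma cinner_zero_left [simp]: "cinner 0 (y::'a::complex_inner) = 0"
  using cinner_add_left[of "0::'a" 0 y] by simp

lemma cinner_zero_right [simp]: "cinner x (0::'a::complex_inner) = 0"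
  using cinner_add_right[of x "0::'a" 0] by simp

lemma cinner_minus_left: "cinner (- x) y = - cinner x (y::'a::complex_inner)"
  using cinner_add_left[of "-x" x y] by (simp add: eq_neg_iff_add_eq_0)

lemma cinner_minus_right: "cinner x (- y) = - cinner x (y::'a::complex_inner)"
  using cinner_add_right[of x "-y" y] by (simp add: eq_neg_iff_add_eq_0)

lemma cinner_diff_left: "cinner (x - y) z = cinner x z - cinner y (z::'a::complex_inner)"
  using cinner_add_left[of x "-y" z] cinner_minus_left[of y z] by simp

lemma cinner_diff_right: "cinner x (y - z) = cinner x y - cinner x (z::'a::complex_inner)"
  using cinner_add_right[of x y "-z"] cinner_minus_right[of x z] by simp

lemma cinner_scaleR_left: "cinner (r *\<^sub>R x) y = of_real r * cinner x (y::'a::complex_inner)"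
  by (simp add: scaleR_scaleC cinner_scaleC_left)

lemma cinner_scaleR_right: "cinner x (r *\<^sub>R y) = of_real r * cinner x (y::'a::complex_inner)"
  by (simp add: scaleR_scaleC cinner_scaleC_right)

lemma cinner_sum_left: "cinner (sum f A) y = (\<Sum>a\<in>A. cinner (f a) (y::'a::complex_inner))"
  by (induction A rule: infinite_finite_induct) (auto simp: cinner_add_left)

lemma cinner_sum_right: "cinner y (sum f A) = (\<Sum>a\<in>A. cinner y (f a::'a::complex_inner))"
  by (induction A rule: infinite_finite_induct) (auto simp: cinner_add_right)

lemma cinner_self_real: "cinner x x = complex_of_real ((norm (x::'a::complex_inner))\<^sup>2)"
proof -
  have "Im (cinner x x) = 0" "0 \<le> Re (cinner x x)" using cinner_ge_zero by auto
  moreover have "(norm x)\<^sup>2 = Re (cinner x x)"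
    using norm_eq_sqrt_cinner[of x] \<open>0 \<le> Re (cinner x x)\<close> by simp
  ultimately show ?thesis by (simp add: complex_eq_iff)
qed

lemma norm_sq_cinner: "(norm (x::'a::complex_inner))\<^sup>2 = Re (cinner x x)"
  using cinner_self_real[of x] by simp

lemma cinner_eq_all_left:
  assumes "\<And>z. cinner z x = cinner z (y::'a::complex_inner)"
  shows "x = y"
proof -
  have "cinner (x - y) (x - y) = 0"
    using assms[of "x-y"] by (simp add: cinner_diff_right)
  then have "x - y = 0" using cinner_eq_zero_iff by blast
  then show ?thesis by simp
qed

lemma norm_diff_sq: "(norm (x - y))\<^sup>2 = (norm x)\<^sup>2 + (norm y)\<^sup>2 - 2 * Re (cinner x (y::'a::complex_inner))"
proof -
  have "cinner (x - y) (x - y) = cinner x x - cinner x y - cinner y x + cinner y y"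
    by (simp add: cinner_diff_left cinner_diff_right)
  moreover have "Re (cinner y x) = Re (cinner x y)" by (subst cinner_commute) simp
  ultimately show ?thesis by (simp add: norm_sq_cinner)
qed

lemma norm_add_sq: "(norm (x + y))\<^sup>2 = (norm x)\<^sup>2 + (norm y)\<^sup>2 + 2 * Re (cinner x (y::'a::complex_inner))"
  using norm_diff_sq[of x "-y"] by (simp add: cinner_minus_right)

lemma bclinearD:
  assumes "bounded_clinear f"
  shows "bounded_linear f" "f (c *\<^sub>C x) = c *\<^sub>C f x"
  using assms unfolding bounded_clinear_def by auto

lemma bclinear_add: "bounded_clinear f \<Longrightarrow> f (x + y) = f x + f y"
  using bclinearD(1) linear_add bounded_linear.linear by blast

lemma bclinear_diff: "bounded_clinear f \<Longrightarrow> f (x - y) = f x - f y"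
  using bclinearD(1) linear_diff bounded_linear.linear by blast

lemma bclinear_zero: "bounded_clinear f \<Longrightarrow> f 0 = 0"
  using bclinearD(1) linear_0 bounded_linear.linear by blast

lemma bclinear_minus: "bounded_clinear f \<Longrightarrow> f (- x) = - f x"
  using bclinearD(1) linear_neg bounded_linear.linear by blast

lemma bclinear_scaleR: "bounded_clinear f \<Longrightarrow> f (r *\<^sub>R x) = r *\<^sub>R f x"
  using bclinearD(1) linear_scale bounded_linear.linear by blast

lemma bclinear_sum: "bounded_clinear f \<Longrightarrow> f (sum g A) = (\<Sum>a\<in>A. f (g a))"
  using bclinearD(1) linear_sum bounded_linear.linear by blast

lemma bclinear_id: "bounded_clinear id"
  by (simp add: bounded_clinear_def bounded_linear_ident[unfolded id_def] id_def)

lemma bclinear_ident: "bounded_clinear (\<lambda>x. x)"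
  by (simp add: bounded_clinear_def bounded_linear_ident)

lemma bclinear_compose: "bounded_clinear f \<Longrightarrow> bounded_clinear g \<Longrightarrow> bounded_clinear (f \<circ> g)"
  unfolding bounded_clinear_def using bounded_linear_compose[of f g] by (auto simp: comp_def)

lemma bclinear_compose': "bounded_clinear f \<Longrightarrow> bounded_clinear g \<Longrightarrow> bounded_clinear (\<lambda>x. f (g x))"
  using bclinear_compose[of f g] by (simp add: comp_def)

lemma bclinear_add_fun: "bounded_clinear f \<Longrightarrow> bounded_clinear g \<Longrightarrow> bounded_clinear (\<lambda>x. f x + g x)"
  unfolding bounded_clinear_def by (auto intro: bounded_linear_add simp: scaleC_add_right)

lemma bclinear_diff_fun: "bounded_clinear f \<Longrightarrow> bounded_clinear g \<Longrightarrow> bounded_clinear (\<lambda>x. f x - g x)"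
  unfolding bounded_clinear_def by (auto intro: bounded_linear_sub simp: scaleC_diff_right)

lemma bclinear_scaleR_fun: "bounded_clinear f \<Longrightarrow> bounded_clinear (\<lambda>x. r *\<^sub>R f x)"
  unfolding bounded_clinear_def
  by (auto intro: bounded_linear_scaleR_right bounded_linear_compose[of "\<lambda>y. r *\<^sub>R y" f] simp: scaleC_scaleR_comm)

lemma bclinear_scaleC_fun: "bounded_clinear (\<lambda>x::'a::complex_normed_vector. c *\<^sub>C x)"
  unfolding bounded_clinear_def
  by (auto intro: bounded_linear_scaleC simp: scaleC_scaleC mult.commute)

lemma bclinear_bound: "bounded_clinear f \<Longrightarrow> norm (f x) \<le> onorm f * norm x"
  using bclinearD(1) onorm by blast

lemma bclinear_onorm_nonneg: "bounded_clinear f \<Longrightarrow> 0 \<le> onorm f"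
  using bclinearD(1) onorm_pos_le by blast

lemma bclinear_cont: "bounded_clinear f \<Longrightarrow> continuous_on UNIV f"
  using bclinearD(1) linear_continuous_on by blast

lemma bclinear_tendsto: "bounded_clinear f \<Longrightarrow> (g \<longlongrightarrow> l) F \<Longrightarrow> ((\<lambda>n. f (g n)) \<longlongrightarrow> f l) F"
  using bclinearD(1) bounded_linear.tendsto by blast


lemma positive_opD:
  assumes "positive_op T"
  shows "bounded_clinear T" "Im (cinner x (T x)) = 0" "0 \<le> Re (cinner x (T x))"
  using assms unfolding positive_op_def nonneg_complex_def by auto

lemma pos_hermitian:
  fixes T :: "'a::complex_inner \<Rightarrow> 'a"
  assumes T: "positive_op T"
  shows "cinner x (T y) = cnj (cinner y (T x))"
proof -
  have b: "bounded_clinear T" using positive_opD[OF T] by simp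
  let ?a = "cinner x (T y)" and ?b = "cinner y (T x)"
  have e1: "cinner (x + y) (T (x + y)) = cinner x (T x) + cinner y (T y) + ?a + ?b"
    by (simp add: bclinear_add[OF b] cinner_add_left cinner_add_right)
  have e2: "cinner (x + \<i> *\<^sub>C y) (T (x + \<i> *\<^sub>C y)) = cinner x (T x) + cinner y (T y) + \<i> * ?a - \<i> * ?b"
    by (simp add: bclinear_add[OF b] bclinearD(2)[OF b] cinner_add_left cinner_add_right
        cinner_scaleC_left cinner_scaleC_right algebra_simps)
  have i1: "Im (cinner (x + y) (T (x + y))) = 0" "Im (cinner (x + \<i> *\<^sub>C y) (T (x + \<i> *\<^sub>C y))) = 0"
       "Im (cinner x (T x)) = 0" "Im (cinner y (T y)) = 0"
    using positive_opD(2)[OF T] by auto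
  have "Im ?a + Im ?b = 0" using e1 i1 by simp
  moreover have "Re ?a - Re ?b = 0" using e2 i1 by simp
  ultimately show ?thesis by (simp add: complex_eq_iff)
qed

lemma pos_selfadj:
  fixes T :: "'a::complex_inner \<Rightarrow> 'a"
  assumes T: "positive_op T"
  shows "cinner (T x) y = cinner x (T y)"
  using pos_hermitian[OF T, of x y] cinner_commute[of "T x" y] by simp

lemma real_quad_lemma:
  fixes A B C :: real
  assumes "\<And>t. 0 \<le> A - 2 * t * B + t\<^sup>2 * B * C" "0 \<le> B" "0 \<le> C"
  shows "B \<le> A * C"
proof (cases "C = 0")
  case True
  show ?thesis
  proof (rule ccontr)
    assume "\<not> B \<le> A * C"
    then have "B > 0" using True by simp
    have "0 \<le> A - 2 * ((A + 1) / (2 * B)) * B" using assms(1)[of "(A+1)/(2*B)"] True by simp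
    also have "\<dots> = -1" using \<open>B > 0\<close> by (simp add: field_simps)
    finally show False by simp
  qed
next
  case False
  then have C: "C > 0" using assms(3) by simp
  have "0 \<le> A - 2 * (1/C) * B + (1/C)\<^sup>2 * B * C" using assms(1) .
  also have "\<dots> = A - B / C" using C by (simp add: field_simps power2_eq_square)
  finally show ?thesis using C by (simp add: field_simps)
qed

lemma pos_CS:
  fixes T :: "'a::complex_inner \<Rightarrow> 'a"
  assumes T: "positive_op T"
  shows "(cmod (cinner y (T x)))\<^sup>2 \<le> Re (cinner y (T y)) * Re (cinner x (T x))"
proof -
  have b: "bounded_clinear T" using positive_opD[OF T] by simp
  let ?b = "cinner y (T x)"
  have h: "cinner x (T y) = cnj ?b" by (rule pos_hermitian[OF T])
  have key: "0 \<le> Re (cinner y (T y)) - 2 * t * (cmod ?b)\<^sup>2 + t\<^sup>2 * (cmod ?b)\<^sup>2 * Re (cinner x (T x))" for t :: real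
  proof -
    let ?s = "complex_of_real t * cnj ?b"
    have "cinner (y - ?s *\<^sub>C x) (T (y - ?s *\<^sub>C x))
        = cinner y (T y) - ?s * ?b - cnj ?s * cinner x (T y) + cnj ?s * ?s * cinner x (T x)"
      by (simp add: bclinear_diff[OF b] bclinearD(2)[OF b] cinner_diff_left cinner_diff_right
          cinner_scaleC_left cinner_scaleC_right algebra_simps)
    also have "\<dots> = cinner y (T y) - complex_of_real (2 * t * (cmod ?b)\<^sup>2)
        + complex_of_real (t\<^sup>2 * (cmod ?b)\<^sup>2) * cinner x (T x)"
    proof -
      have n1: "cnj ?b * ?b = complex_of_real ((cmod ?b)\<^sup>2)"
        using complex_norm_square[of ?b] by (simp add: mult.commute)
      have "?s * ?b = complex_of_real t * (cnj ?b * ?b)" by (simp add: algebra_simps)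
      also have "\<dots> = complex_of_real (t * (cmod ?b)\<^sup>2)" by (simp only: n1 of_real_mult)
      finally have a1: "?s * ?b = complex_of_real (t * (cmod ?b)\<^sup>2)" .
      have "cnj ?s * cinner x (T y) = complex_of_real t * (cnj ?b * ?b)" unfolding h by (simp add: algebra_simps)
      also have "\<dots> = complex_of_real (t * (cmod ?b)\<^sup>2)" by (simp only: n1 of_real_mult)
      finally have a2: "cnj ?s * cinner x (T y) = complex_of_real (t * (cmod ?b)\<^sup>2)" .
      have "cnj ?s * ?s = complex_of_real t * complex_of_real t * (cnj ?b * ?b)" by (simp add: algebra_simps)
      also have "\<dots> = complex_of_real (t\<^sup>2 * (cmod ?b)\<^sup>2)" by (simp only: n1 of_real_mult power2_eq_square)
      finally have a3: "cnj ?s * ?s = complex_of_real (t\<^sup>2 * (cmod ?b)\<^sup>2)" .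
      show ?thesis unfolding a1 a2 a3 by (simp add: algebra_simps)
    qed
    finally have "Re (cinner (y - ?s *\<^sub>C x) (T (y - ?s *\<^sub>C x)))
       = Re (cinner y (T y)) - 2 * t * (cmod ?b)\<^sup>2 + t\<^sup>2 * (cmod ?b)\<^sup>2 * Re (cinner x (T x))"
      by simp
    moreover have "0 \<le> Re (cinner (y - ?s *\<^sub>C x) (T (y - ?s *\<^sub>C x)))" using positive_opD(3)[OF T] .
    ultimately show ?thesis by simp
  qed
  show ?thesis using real_quad_lemma[OF key] positive_opD(3)[OF T] by simp
qed

lemma positive_id: "positive_op (id :: 'a::complex_inner \<Rightarrow> 'a)"
  unfolding positive_op_def nonneg_complex_def
  using bclinear_id cinner_ge_zero by auto

lemma positive_ident: "positive_op (\<lambda>x::'a::complex_inner. x)"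
  using positive_id by (simp add: id_def)

lemma cinner_CS: "cmod (cinner x (y::'a::complex_inner)) \<le> norm x * norm y"
proof -
  have "(cmod (cinner x y))\<^sup>2 \<le> Re (cinner x x) * Re (cinner y y)"
    using pos_CS[OF positive_id, of x y] by simp
  also have "\<dots> = (norm x * norm y)\<^sup>2" by (simp add: norm_sq_cinner power_mult_distrib)
  finally show ?thesis by (rule power2_le_imp_le) simp
qed

lemma pos_zero:
  fixes T :: "'a::complex_inner \<Rightarrow> 'a"
  assumes T: "positive_op T" and q: "Re (cinner x (T x)) = 0"
  shows "T x = 0"
proof -
  have "(cmod (cinner (T x) (T x)))\<^sup>2 \<le> 0" using pos_CS[OF T, of "T x" x] q by simp
  then have "cinner (T x) (T x) = 0" by simp
  then show ?thesis using cinner_eq_zero_iff by blast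
qed

lemma pos_norm_bound:
  fixes T :: "'a::complex_inner \<Rightarrow> 'a"
  assumes T: "positive_op T"
  shows "(norm (T x))\<^sup>2 \<le> onorm T * Re (cinner x (T x))"
proof (cases "T x = 0")
  case True
  then show ?thesis using positive_opD(3)[OF T, of x] bclinear_onorm_nonneg positive_opD(1)[OF T] by simp
next
  case False
  have b: "bounded_clinear T" using positive_opD[OF T] by simp
  have "cmod (cinner (T x) (T x)) = (norm (T x))\<^sup>2" by (simp only: cinner_self_real norm_of_real) simp
  then have "((norm (T x))\<^sup>2)\<^sup>2 = (cmod (cinner (T x) (T x)))\<^sup>2" by simp
  also have "\<dots> \<le> Re (cinner (T x) (T (T x))) * Re (cinner x (T x))" by (rule pos_CS[OF T])
  also have "\<dots> \<le> (norm (T x) * (onorm T * norm (T x))) * Re (cinner x (T x))"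
  proof (rule mult_right_mono)
    have "Re (cinner (T x) (T (T x))) \<le> cmod (cinner (T x) (T (T x)))" by (rule complex_Re_le_cmod)
    also have "\<dots> \<le> norm (T x) * norm (T (T x))" by (rule cinner_CS)
    also have "\<dots> \<le> norm (T x) * (onorm T * norm (T x))"
      by (rule mult_left_mono) (auto intro: bclinear_bound[OF b])
    finally show "Re (cinner (T x) (T (T x))) \<le> norm (T x) * (onorm T * norm (T x))" .
    show "0 \<le> Re (cinner x (T x))" using positive_opD(3)[OF T] .
  qed
  finally have "(norm (T x))\<^sup>2 * (norm (T x))\<^sup>2 \<le> (onorm T * Re (cinner x (T x))) * (norm (T x))\<^sup>2"
    by (simp add: power2_eq_square algebra_simps)
  moreover have "(norm (T x))\<^sup>2 > 0" using False by simp
  ultimately show ?thesis by (meson mult_le_cancel_right_pos)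
qed

section \<open>Adjoints\<close>

definition is_adj :: "('a::complex_inner \<Rightarrow> 'b::complex_inner) \<Rightarrow> ('b \<Rightarrow> 'a) \<Rightarrow> bool" where
  "is_adj f g \<longleftrightarrow> (\<forall>x y. cinner (f x) y = cinner x (g y))"

lemma cadj_eq:
  assumes "is_adj f g"
  shows "cadj f = g"
proof -
  have "\<forall>x y. cinner (f x) y = cinner x (cadj f y)"
    unfolding cadj_def by (rule someI[of _ g]) (use assms is_adj_def in auto)
  then have "cadj f y = g y" for y
    using assms unfolding is_adj_def by (intro cinner_eq_all_left) metis
  then show ?thesis by auto
qed

lemma cadj_is_adj: "is_adj f g \<Longrightarrow> is_adj f (cadj f)"
  using cadj_eq by metis

lemma is_adj_sym: "is_adj f g \<Longrightarrow> is_adj g f"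
  unfolding is_adj_def by (metis cinner_commute)

lemma is_adj_comp: "is_adj f g \<Longrightarrow> is_adj f' g' \<Longrightarrow> is_adj (f \<circ> f') (g' \<circ> g)"
  unfolding is_adj_def by simp

lemma is_adj_pos: "positive_op T \<Longrightarrow> is_adj T T"
  unfolding is_adj_def using pos_selfadj by blast

lemma is_adj_id: "is_adj id id"
  unfolding is_adj_def by simp

lemma adj_bclinear:
  fixes f :: "'a::complex_inner \<Rightarrow> 'b::complex_inner"
  assumes f: "bounded_clinear f" and a: "is_adj f g"
  shows "bounded_clinear g"
proof -
  have add: "g (y + z) = g y + g z" for y z
    by (rule cinner_eq_all_left) (use a in \<open>metis is_adj_def cinner_add_right\<close>)
  have sc: "g (c *\<^sub>C y) = c *\<^sub>C g y" for c y
    by (rule cinner_eq_all_left) (use a in \<open>metis is_adj_def cinner_scaleC_right\<close>)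
  have bnd: "norm (g y) \<le> norm y * onorm f" for y
  proof (cases "g y = 0")
    case True then show ?thesis using bclinear_onorm_nonneg[OF f] by simp
  next
    case False
    have "(norm (g y))\<^sup>2 = Re (cinner (g y) (g y))" by (rule norm_sq_cinner)
    also have "\<dots> = Re (cinner (f (g y)) y)" using a unfolding is_adj_def by simp
    also have "\<dots> \<le> cmod (cinner (f (g y)) y)" by (rule complex_Re_le_cmod)
    also have "\<dots> \<le> norm (f (g y)) * norm y" by (rule cinner_CS)
    also have "\<dots> \<le> (onorm f * norm (g y)) * norm y"
      by (rule mult_right_mono) (auto intro: bclinear_bound[OF f])
    finally have "norm (g y) * norm (g y) \<le> (norm y * onorm f) * norm (g y)"
      by (simp add: power2_eq_square algebra_simps)
    then show ?thesis using False by simp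
  qed
  have "bounded_linear g"
    by (rule bounded_linear_intro[where K="onorm f"])
      (auto simp: add scaleR_scaleC sc intro: bnd)
  then show ?thesis unfolding bounded_clinear_def using sc by auto
qed


lemma riesz_aux_contra:
  fixes M t B V :: real
  assumes M: "M > 0" and B: "B > 0" and V: "V \<ge> 0"
    and ineq: "\<And>t. t > 0 \<Longrightarrow> (M + t * B)\<^sup>2 \<le> M\<^sup>2 * (1 + t\<^sup>2 * B * V)"
  shows False
proof -
  define t where "t = 1 / (M * V + 1)"
  have MV: "M * V \<ge> 0" using M V by simp
  have t: "t > 0" unfolding t_def using MV by simp
  have "(M + t * B)\<^sup>2 \<le> M\<^sup>2 * (1 + t\<^sup>2 * B * V)" using ineq[OF t] .
  then have "2 * M * t * B + t\<^sup>2 * B\<^sup>2 \<le> M\<^sup>2 * t\<^sup>2 * B * V"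
    by (simp add: power2_eq_square algebra_simps)
  then have "(t * B) * (2 * M + t * B) \<le> (t * B) * (M\<^sup>2 * t * V)"
    by (simp add: power2_eq_square algebra_simps)
  then have "2 * M + t * B \<le> M\<^sup>2 * t * V" using t B by (simp add: mult_le_cancel_left_pos)
  moreover have "M\<^sup>2 * t * V < M"
  proof -
    have "M\<^sup>2 * t * V = M * (M * V / (M * V + 1))" unfolding t_def by (simp add: power2_eq_square)
    also have "\<dots> < M * 1" using M MV by (intro mult_strict_left_mono) auto
    finally show ?thesis by simp
  qed
  ultimately show False using M t B by (smt (verit) mult_pos_pos)
qed

lemma riesz:
  fixes l :: "'a::chilbert_space \<Rightarrow> complex"
  assumes ladd: "\<And>x y. l (x + y) = l x + l y"
    and lsc: "\<And>c x. l (c *\<^sub>C x) = c * l x"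
    and lbnd: "\<And>x. cmod (l x) \<le> K * norm x"
  shows "\<exists>z. \<forall>x. l x = cinner z x"
proof (cases "\<forall>x. l x = 0")
  case True
  then show ?thesis by (intro exI[of _ 0]) simp
next
  case False
  then obtain x0 where x0: "l x0 \<noteq> 0" by blast
  have l0: "l 0 = 0" using ladd[of 0 0] by simp
  have lR: "l (r *\<^sub>R x) = of_real r * l x" for r x by (simp add: scaleR_scaleC lsc)
  have ldiff: "l (x - y) = l x - l y" for x y
    using ladd[of "x - y" y] by simp
  have blin: "bounded_linear l"
    by (rule bounded_linear_intro[where K=K]) (auto simp: ladd lR scaleR_conv_of_real mult.commute lbnd)
  define Sset where "Sset = {cmod (l x) | x. norm x \<le> 1}"
  define M where "M = Sup Sset"
  have "cmod (l 0) \<in> Sset" unfolding Sset_def by (intro CollectI exI[of _ 0]) simp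
  then have Sne: "Sset \<noteq> {}" by blast
  have Sbdd: "bdd_above Sset" unfolding Sset_def
  proof (rule bdd_aboveI[where M="\<bar>K\<bar>"], clarify)
    fix x :: 'a assume "norm x \<le> 1"
    have "cmod (l x) \<le> K * norm x" by (rule lbnd)
    also have "\<dots> \<le> \<bar>K\<bar> * norm x" by (intro mult_right_mono) auto
    also have "\<dots> \<le> \<bar>K\<bar> * 1" using \<open>norm x \<le> 1\<close> by (intro mult_left_mono) auto
    finally show "cmod (l x) \<le> \<bar>K\<bar>" by simp
  qed
  have inS: "cmod (l x) \<le> M" if "norm x \<le> 1" for x
    unfolding M_def using that Sbdd by (intro cSup_upper) (auto simp: Sset_def)
  have Mbound: "cmod (l x) \<le> M * norm x" for x
  proof (cases "x = 0")
    case True then show ?thesis using l0 by simp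
  next
    case False
    then have nx: "norm x > 0" by simp
    have "cmod (l ((1 / norm x) *\<^sub>R x)) \<le> M" using False by (intro inS) simp
    then have "cmod (l x) / norm x \<le> M" using nx by (simp add: lR norm_mult norm_divide)
    then show ?thesis using nx by (simp add: field_simps)
  qed
  have Mpos: "M > 0"
  proof -
    have "0 < cmod (l x0)" using x0 by simp
    also have "\<dots> \<le> M * norm x0" by (rule Mbound)
    finally have "0 < M * norm x0" .
    moreover have "M \<ge> 0" using inS[of 0] l0 by simp
    ultimately show ?thesis by (metis less_eq_real_def mult_zero_left)
  qed
  have "\<exists>x. norm x \<le> 1 \<and> M - 1 / (real n + 1) < cmod (l x)" for n
  proof -
    have "M - 1 / (real n + 1) < Sup Sset" unfolding M_def[symmetric] by simp
    then obtain s where "s \<in> Sset" "M - 1 / (real n + 1) < s"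
      using less_cSup_iff[OF Sne Sbdd] by auto
    then show ?thesis unfolding Sset_def by auto
  qed
  then obtain xs where xs: "\<And>n. norm (xs n) \<le> 1" "\<And>n. M - 1 / (real n + 1) < cmod (l (xs n))"
    by metis
  define ys where "ys n = (if l (xs n) = 0 then 0 else (cnj (l (xs n)) / complex_of_real (cmod (l (xs n)))) *\<^sub>C xs n)" for n
  define a where "a n = cmod (l (xs n))" for n
  have ys_l: "l (ys n) = complex_of_real (a n)" for n
  proof (cases "l (xs n) = 0")
    case True then show ?thesis by (simp add: ys_def a_def l0)
  next
    case False
    have "l (ys n) = cnj (l (xs n)) * l (xs n) / complex_of_real (cmod (l (xs n)))"
      using False by (simp add: ys_def lsc)
    also have "\<dots> = complex_of_real (cmod (l (xs n)))"
      using False by (simp add: complex_norm_square[symmetric] mult.commute power2_eq_square)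
    finally show ?thesis by (simp add: a_def)
  qed
  have ys_n: "norm (ys n) \<le> 1" for n
  proof (cases "l (xs n) = 0")
    case True then show ?thesis by (simp add: ys_def)
  next
    case False
    have "norm (ys n) = norm (xs n)"
      using False by (simp add: ys_def complex_normed_vector_class.norm_scaleC norm_divide)
    then show ?thesis using xs(1) by simp
  qed
  have a_lo: "M - 1 / (real n + 1) < a n" for n using xs(2) a_def by simp
  have a_hi: "a n \<le> M" for n using inS[OF xs(1)] a_def by simp
  have a_nn: "a n \<ge> 0" for n using a_def by simp
  have est: "(norm (ys n - ys m))\<^sup>2 \<le> 4 * ((1 / (real n + 1) + 1 / (real m + 1)) / M)" for n m
  proof -
    define \<delta> where "\<delta> = (1 / (real n + 1) + 1 / (real m + 1)) / M"
    have \<delta>0: "\<delta> \<ge> 0" unfolding \<delta>_def using Mpos by simp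
    have par: "(norm (ys n - ys m))\<^sup>2 = 2 * (norm (ys n))\<^sup>2 + 2 * (norm (ys m))\<^sup>2 - (norm (ys n + ys m))\<^sup>2"
      using norm_add_sq[of "ys n" "ys m"] norm_diff_sq[of "ys n" "ys m"] by simp
    have sq1: "(norm (ys k))\<^sup>2 \<le> 1" for k using ys_n[of k] by (simp add: power_le_one)
    have "a n + a m = cmod (l (ys n + ys m))" using ladd ys_l a_nn
      by (simp add: of_real_add[symmetric] del: of_real_add)
    also have "\<dots> \<le> M * norm (ys n + ys m)" by (rule Mbound)
    finally have "a n + a m \<le> M * norm (ys n + ys m)" .
    moreover have "2 * M - M * \<delta> < a n + a m"
    proof -
      have "M * \<delta> = 1 / (real n + 1) + 1 / (real m + 1)" unfolding \<delta>_def using Mpos by simp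
      then show ?thesis using a_lo[of n] a_lo[of m] by linarith
    qed
    ultimately have "M * (2 - \<delta>) < M * norm (ys n + ys m)" by (simp add: algebra_simps)
    then have lo: "2 - \<delta> < norm (ys n + ys m)" using Mpos by simp
    show ?thesis
    proof (cases "\<delta> \<le> 2")
      case True
      have "(2 - \<delta>)\<^sup>2 \<le> (norm (ys n + ys m))\<^sup>2" using lo True by (intro power_mono) auto
      moreover have "(2 - \<delta>)\<^sup>2 = 4 - 4 * \<delta> + \<delta>\<^sup>2" by (simp add: power2_eq_square algebra_simps)
      ultimately have "4 - 4 * \<delta> \<le> (norm (ys n + ys m))\<^sup>2" using zero_le_power2[of \<delta>] by linarith
      then show ?thesis using par sq1[of n] sq1[of m] unfolding \<delta>_def[symmetric] by linarith
    next
      case False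
      have "(norm (ys n - ys m))\<^sup>2 \<le> 4" using par sq1[of n] sq1[of m] zero_le_power2[of "norm (ys n + ys m)"] by linarith
      then show ?thesis using False unfolding \<delta>_def[symmetric] by linarith
    qed
  qed
  have cauchy: "Cauchy ys"
  proof (rule metric_CauchyI)
    fix e :: real assume e: "e > 0"
    obtain N :: nat where N: "8 / (M * e\<^sup>2) < real N + 1"
      using reals_Archimedean2[of "8 / (M * e\<^sup>2)"] by (metis add.commute add_less_same_cancel2 less_add_one less_trans of_nat_Suc)
    have "dist (ys m) (ys n) < e" if "m \<ge> N" "n \<ge> N" for m n
    proof -
      have i1: "1 / (real k + 1) \<le> 1 / (real N + 1)" if "k \<ge> N" for k
        using that by (intro divide_left_mono) auto
      have "(norm (ys m - ys n))\<^sup>2 \<le> 4 * ((1 / (real m + 1) + 1 / (real n + 1)) / M)" by (rule est)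
      also have "\<dots> \<le> 4 * ((2 / (real N + 1)) / M)"
        using i1[OF \<open>m\<ge>N\<close>] i1[OF \<open>n\<ge>N\<close>] Mpos by (intro mult_left_mono divide_right_mono) auto
      also have "\<dots> = 8 / (M * (real N + 1))" by (simp add: field_simps)
      also have "\<dots> < e\<^sup>2"
      proof -
        have "8 / (M * e\<^sup>2) * (M * e\<^sup>2) < (real N + 1) * (M * e\<^sup>2)"
          using N Mpos e by (intro mult_strict_right_mono) auto
        then have "8 < (real N + 1) * (M * e\<^sup>2)" using Mpos e by simp
        then have "8 < e\<^sup>2 * (M * (real N + 1))" by (simp add: algebra_simps)
        moreover have "M * (real N + 1) > 0" using Mpos by simp
        ultimately show ?thesis by (simp add: divide_less_eq)
      qed
      finally have "(norm (ys m - ys n))\<^sup>2 < e\<^sup>2" .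
      then have "norm (ys m - ys n) < e" using e by (simp add: power_less_imp_less_base)
      then show ?thesis by (simp add: dist_norm)
    qed
    then show "\<exists>N. \<forall>m\<ge>N. \<forall>n\<ge>N. dist (ys m) (ys n) < e" by blast
  qed
  then obtain u where u: "ys \<longlonglongrightarrow> u" using Cauchy_convergent_iff convergent_def by blast
  have lu_lim: "(\<lambda>n. l (ys n)) \<longlonglongrightarrow> l u" using bounded_linear.tendsto[OF blin u] .
  have a_lim: "(\<lambda>n. complex_of_real (a n)) \<longlonglongrightarrow> complex_of_real M"
  proof -
    have "(\<lambda>n. 1 / (real n + 1)) \<longlonglongrightarrow> 0"
      using LIMSEQ_inverse_real_of_nat by (simp add: inverse_eq_divide add.commute)
    then have "(\<lambda>n. M - 1 / (real n + 1)) \<longlonglongrightarrow> M - 0"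
      by (intro tendsto_diff tendsto_const)
    then have lo: "(\<lambda>n. M - 1 / (real n + 1)) \<longlonglongrightarrow> M" by simp
    have "a \<longlonglongrightarrow> M"
      by (rule real_tendsto_sandwich[OF _ _ lo tendsto_const]) (auto intro: always_eventually less_imp_le[OF a_lo] a_hi)
    then show ?thesis by (rule tendsto_of_real)
  qed
  have luM: "l u = complex_of_real M"
    using LIMSEQ_unique[OF lu_lim] a_lim ys_l by simp
  have nu_le: "norm u \<le> 1"
    using tendsto_norm[OF u] by (rule LIMSEQ_le_const2) (auto intro: ys_n)
  have nu: "norm u = 1"
  proof -
    have "M \<le> M * norm u" using Mbound[of u] luM Mpos by simp
    then have "1 \<le> norm u" using Mpos by simp
    then show ?thesis using nu_le by simp
  qed
  have uu: "cinner u u = 1" using cinner_self_real[of u] nu by simp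
  have orth: "l v = 0" if v: "cinner u v = 0" for v
  proof (rule ccontr)
    assume lv: "l v \<noteq> 0"
    define B where "B = (cmod (l v))\<^sup>2"
    define V where "V = (norm v)\<^sup>2"
    have B: "B > 0" using lv B_def by simp
    have "(M + t * B)\<^sup>2 \<le> M\<^sup>2 * (1 + t\<^sup>2 * B * V)" if t: "t > 0" for t
    proof -
      define w where "w = u + (complex_of_real t * cnj (l v)) *\<^sub>C v"
      have lw: "l w = complex_of_real (M + t * B)"
        unfolding w_def B_def using ladd lsc luM
        by (simp add: complex_norm_square[symmetric] mult.commute mult.left_commute)
      have "(norm w)\<^sup>2 = (norm u)\<^sup>2 + (norm ((complex_of_real t * cnj (l v)) *\<^sub>C v))\<^sup>2
           + 2 * Re (cinner u ((complex_of_real t * cnj (l v)) *\<^sub>C v))"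
        unfolding w_def by (rule norm_add_sq)
      also have "\<dots> = 1 + t\<^sup>2 * B * V"
        using nu t by (simp add: cinner_scaleC_right v complex_normed_vector_class.norm_scaleC
            B_def V_def power_mult_distrib norm_mult)
      finally have nw: "(norm w)\<^sup>2 = 1 + t\<^sup>2 * B * V" .
      have "M + t * B \<ge> 0" using Mpos t B by simp
      then have "M + t * B \<le> M * norm w" using Mbound[of w] unfolding lw norm_of_real by simp
      then have "(M + t * B)\<^sup>2 \<le> (M * norm w)\<^sup>2"
        using \<open>M + t * B \<ge> 0\<close> by (intro power_mono) auto
      then show ?thesis by (simp add: power_mult_distrib nw)
    qed
    then show False using riesz_aux_contra[OF Mpos B, of V] V_def by simp
  qed
  show ?thesis
  proof (intro exI allI)
    fix x
    define \<alpha> where "\<alpha> = cinner u x"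
    have "cinner u (x - \<alpha> *\<^sub>C u) = 0" by (simp add: cinner_diff_right cinner_scaleC_right uu \<alpha>_def)
    then have "l (x - \<alpha> *\<^sub>C u) = 0" by (rule orth)
    then have "l x = \<alpha> * complex_of_real M" by (simp add: ldiff lsc luM)
    then show "l x = cinner (complex_of_real M *\<^sub>C u) x"
      by (simp add: cinner_scaleC_left \<alpha>_def mult.commute)
  qed
qed

lemma adj_exists:
  fixes f :: "'a::chilbert_space \<Rightarrow> 'b::chilbert_space"
  assumes f: "bounded_clinear f"
  shows "\<exists>g. is_adj f g"
proof -
  have "\<exists>z. \<forall>x. cinner y (f x) = cinner z x" for y
  proof (rule riesz)
    show "cinner y (f (x1 + x2)) = cinner y (f x1) + cinner y (f x2)" for x1 x2
      by (simp add: bclinear_add[OF f] cinner_add_right)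
    show "cinner y (f (c *\<^sub>C x)) = c * cinner y (f x)" for c x
      by (simp add: bclinearD(2)[OF f] cinner_scaleC_right)
    show "cmod (cinner y (f x)) \<le> (norm y * onorm f) * norm x" for x
    proof -
      have "cmod (cinner y (f x)) \<le> norm y * norm (f x)" by (rule cinner_CS)
      also have "\<dots> \<le> norm y * (onorm f * norm x)" by (intro mult_left_mono bclinear_bound[OF f]) auto
      finally show ?thesis by (simp add: mult.assoc)
    qed
  qed
  then obtain g where g: "\<And>y x. cinner y (f x) = cinner (g y) x" by metis
  have "is_adj f g" unfolding is_adj_def
    by (metis g cinner_commute)
  then show ?thesis by blast
qed

lemma cadj_adj: "bounded_clinear (f :: 'a::chilbert_space \<Rightarrow> 'b::chilbert_space) \<Longrightarrow> is_adj f (cadj f)"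
  using adj_exists cadj_is_adj by blast

lemma cadj_ip: "bounded_clinear (f :: 'a::chilbert_space \<Rightarrow> 'b::chilbert_space) \<Longrightarrow> cinner (f x) y = cinner x (cadj f y)"
  using cadj_adj unfolding is_adj_def by blast

lemma cadj_bclinear: "bounded_clinear (f :: 'a::chilbert_space \<Rightarrow> 'b::chilbert_space) \<Longrightarrow> bounded_clinear (cadj f)"
  using cadj_adj adj_bclinear by blast


section \<open>Coefficients of \<open>1 - sqrt(1 - z)\<close>\<close>

function cf :: "nat \<Rightarrow> real" where
  "cf n = (if n = 0 then 0 else if n = 1 then 1/2 else (\<Sum>i\<in>{1..<n}. cf i * cf (n - i)) / 2)"
  by auto
termination
  by (relation "Wellfounded.measure id") auto

declare cf.simps [simp del]

lemma cf_0 [simp]: "cf 0 = 0" by (simp add: cf.simps)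
lemma cf_1 [simp]: "cf 1 = 1/2" by (simp add: cf.simps)
lemma cf_Suc0 [simp]: "cf (Suc 0) = 1/2" using cf_1 by simp
lemma cf_rec: "n \<ge> 2 \<Longrightarrow> cf n = (\<Sum>i\<in>{1..<n}. cf i * cf (n - i)) / 2"
  by (subst cf.simps) simp

lemma cf_nonneg: "cf n \<ge> 0"
proof (induction n rule: less_induct)
  case (less n)
  show ?case
  proof (cases "n \<ge> 2")
    case True
    have "(\<Sum>i\<in>{1..<n}. cf i * cf (n - i)) \<ge> 0"
      by (intro sum_nonneg mult_nonneg_nonneg less) auto
    then show ?thesis using cf_rec[OF True] by simp
  next
    case False
    then have "n = 0 \<or> n = 1" by auto
    then show ?thesis by auto
  qed
qed

lemma cf_conv: "(\<Sum>i\<le>n. cf i * cf (n - i)) = 2 * cf n - (if n = 1 then 1 else 0)"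
proof (cases "n \<ge> 2")
  case True
  have "{..n} = {0} \<union> {1..<n} \<union> {n}" using True by auto
  then have "(\<Sum>i\<le>n. cf i * cf (n - i)) = cf 0 * cf n + (\<Sum>i\<in>{1..<n}. cf i * cf (n - i)) + cf n * cf 0"
    using True by (simp add: sum.union_disjoint)
  also have "\<dots> = 2 * cf n" using cf_rec[OF True] by simp
  finally show ?thesis using True by simp
next
  case False
  then have "n = 0 \<or> n = 1" by auto
  then show ?thesis by (auto simp: atMost_Suc)
qed

lemma cf_partial_le: "(\<Sum>i<N. cf i) \<le> 1"
proof (induction N rule: less_induct)
  case (less N)
  show ?case
  proof (cases "N \<ge> 2")
    case False
    then have "N = 0 \<or> N = 1" by auto
    then show ?thesis by auto
  next
    case True
    define s where "s M = (\<Sum>i<M. cf i)" for M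
    have sN1: "s (N - 1) \<le> 1" unfolding s_def using less True by simp
    have s0: "s M \<ge> 0" for M unfolding s_def by (intro sum_nonneg cf_nonneg)
    have "(\<Sum>k<N. \<Sum>i\<le>k. cf i * cf (k - i)) = (\<Sum>k<N. 2 * cf k - (if k = 1 then 1 else 0))"
      by (simp add: cf_conv)
    also have "\<dots> = 2 * s N - 1"
    proof -
      have "(\<Sum>k<N. (if k = 1 then 1 else 0 :: real)) = 1"
        using True by (simp add: sum.delta)
      then show ?thesis by (simp add: sum_subtractf sum_distrib_left s_def)
    qed
    finally have e1: "(\<Sum>k<N. \<Sum>i\<le>k. cf i * cf (k - i)) = 2 * s N - 1" .
    have "(\<Sum>k<N. \<Sum>i\<le>k. cf i * cf (k - i)) = (\<Sum>(i,j)\<in>{(i,j). i + j < N}. cf i * cf j)"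
      by (rule sum.triangle_reindex[symmetric])
    also have "\<dots> = (\<Sum>(i,j)\<in>{(i,j). i + j < N} \<inter> ({..<N-1} \<times> {..<N-1}). cf i * cf j)"
    proof (rule sum.mono_neutral_right)
      show "finite {(i, j). i + j < N}"
        by (rule finite_subset[of _ "{..<N} \<times> {..<N}"]) auto
      show "{(i, j). i + j < N} \<inter> ({..<N - 1} \<times> {..<N - 1}) \<subseteq> {(i, j). i + j < N}" by auto
      show "\<forall>x\<in>{(i, j). i + j < N} - {(i, j). i + j < N} \<inter> ({..<N - 1} \<times> {..<N - 1}).
              (case x of (i, j) \<Rightarrow> cf i * cf j) = 0"
      proof clarify
        fix i j assume "i + j < N" "(i, j) \<notin> {(i, j). i + j < N} \<inter> ({..<N - 1} \<times> {..<N - 1})"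
        then have "i = 0 \<or> j = 0" by auto
        then show "cf i * cf j = 0" by auto
      qed
    qed
    also have "\<dots> \<le> (\<Sum>(i,j)\<in>{..<N-1} \<times> {..<N-1}. cf i * cf j)"
      by (intro sum_mono2) (auto intro: mult_nonneg_nonneg cf_nonneg)
    also have "\<dots> = s (N - 1) * s (N - 1)"
      unfolding s_def by (simp add: sum_product sum.cartesian_product)
    also have "\<dots> \<le> 1 * 1" using sN1 s0 by (intro mult_mono) auto
    finally have "2 * s N - 1 \<le> 1" using e1 by simp
    then show ?thesis unfolding s_def by simp
  qed
qed

lemma cf_summable: "summable cf"
  by (rule summableI_nonneg_bounded[where x=1]) (auto intro: cf_nonneg cf_partial_le)

lemma cf_suminf_le: "suminf cf \<le> 1"
  by (rule suminf_le_const[OF cf_summable cf_partial_le])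

section \<open>Cauchy product for bounded bilinear maps\<close>

lemma Cauchy_product_sums_bilinear:
  fixes prod :: "'a::banach \<Rightarrow> 'b::banach \<Rightarrow> 'c::banach"
  assumes bb: "bounded_bilinear prod"
    and pn: "\<And>x y. norm (prod x y) \<le> norm x * norm y"
    and a: "summable (\<lambda>k. norm (a k))"
    and b: "summable (\<lambda>k. norm (b k))"
  shows "(\<lambda>k. \<Sum>i\<le>k. prod (a i) (b (k - i))) sums (prod (\<Sum>k. a k) (\<Sum>k. b k))"
proof -
  interpret bounded_bilinear prod by (rule bb)
  let ?S1 = "\<lambda>n::nat. {..<n} \<times> {..<n}"
  let ?S2 = "\<lambda>n::nat. {(i,j). i + j < n}"
  have S1_mono: "\<And>m n. m \<le> n \<Longrightarrow> ?S1 m \<subseteq> ?S1 n" by auto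
  have S2_le_S1: "\<And>n. ?S2 n \<subseteq> ?S1 n" by auto
  have S1_le_S2: "\<And>n. ?S1 (n div 2) \<subseteq> ?S2 n" by auto
  have finite_S1: "\<And>n. finite (?S1 n)" by simp
  with S2_le_S1 have finite_S2: "\<And>n. finite (?S2 n)" by (rule finite_subset)
  let ?g = "\<lambda>(i,j). prod (a i) (b j)"
  let ?f = "\<lambda>(i,j). norm (a i) * norm (b j)"
  have f_nonneg: "\<And>x. 0 \<le> ?f x" by auto
  then have norm_sum_f: "\<And>A. norm (sum ?f A) = sum ?f A"
    unfolding real_norm_def
    by (simp only: abs_of_nonneg sum_nonneg [rule_format])
  have sp: "prod (sum a {..<n}) (sum b {..<n}) = sum ?g (?S1 n)" for n
    unfolding sum_left by (simp add: sum_right sum.cartesian_product)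
  have "(\<lambda>n. prod (\<Sum>k<n. a k) (\<Sum>k<n. b k)) \<longlonglongrightarrow> prod (\<Sum>k. a k) (\<Sum>k. b k)"
    by (intro tendsto summable_LIMSEQ summable_norm_cancel [OF a] summable_norm_cancel [OF b])
  then have 1: "(\<lambda>n. sum ?g (?S1 n)) \<longlonglongrightarrow> prod (\<Sum>k. a k) (\<Sum>k. b k)"
    by (simp only: sp)
  have "(\<lambda>n. (\<Sum>k<n. norm (a k)) * (\<Sum>k<n. norm (b k))) \<longlonglongrightarrow> (\<Sum>k. norm (a k)) * (\<Sum>k. norm (b k))"
    using a b by (intro tendsto_mult summable_LIMSEQ)
  then have "(\<lambda>n. sum ?f (?S1 n)) \<longlonglongrightarrow> (\<Sum>k. norm (a k)) * (\<Sum>k. norm (b k))"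
    by (simp only: sum_product sum.Sigma [rule_format] finite_lessThan)
  then have "convergent (\<lambda>n. sum ?f (?S1 n))"
    by (rule convergentI)
  then have Cauchy: "Cauchy (\<lambda>n. sum ?f (?S1 n))"
    by (rule convergent_Cauchy)
  have "Zfun (\<lambda>n. sum ?f (?S1 n - ?S2 n)) sequentially"
  proof (rule ZfunI, simp only: eventually_sequentially norm_sum_f)
    fix r :: real
    assume r: "0 < r"
    from CauchyD [OF Cauchy r] obtain N
      where "\<forall>m\<ge>N. \<forall>n\<ge>N. norm (sum ?f (?S1 m) - sum ?f (?S1 n)) < r" ..
    then have "\<And>m n. N \<le> n \<Longrightarrow> n \<le> m \<Longrightarrow> norm (sum ?f (?S1 m - ?S1 n)) < r"
      by (simp only: sum_diff finite_S1 S1_mono)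
    then have N: "\<And>m n. N \<le> n \<Longrightarrow> n \<le> m \<Longrightarrow> sum ?f (?S1 m - ?S1 n) < r"
      by (simp only: norm_sum_f)
    show "\<exists>N. \<forall>n\<ge>N. sum ?f (?S1 n - ?S2 n) < r"
    proof (intro exI allI impI)
      fix n
      assume "2 * N \<le> n"
      then have n: "N \<le> n div 2" by simp
      have "sum ?f (?S1 n - ?S2 n) \<le> sum ?f (?S1 n - ?S1 (n div 2))"
        by (intro sum_mono2 finite_Diff finite_S1 f_nonneg Diff_mono subset_refl S1_le_S2)
      also have "\<dots> < r"
        using n div_le_dividend by (rule N)
      finally show "sum ?f (?S1 n - ?S2 n) < r" .
    qed
  qed
  then have "Zfun (\<lambda>n. sum ?g (?S1 n - ?S2 n)) sequentially"
    apply (rule Zfun_le [rule_format])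
    apply (simp only: norm_sum_f)
    apply (rule order_trans [OF norm_sum sum_mono])
    apply (auto simp add: pn)
    done
  then have 2: "(\<lambda>n. sum ?g (?S1 n) - sum ?g (?S2 n)) \<longlonglongrightarrow> 0"
    unfolding tendsto_Zfun_iff diff_0_right
    by (simp only: sum_diff finite_S1 S2_le_S1)
  with 1 have "(\<lambda>n. sum ?g (?S2 n)) \<longlonglongrightarrow> prod (\<Sum>k. a k) (\<Sum>k. b k)"
    by (rule Lim_transform2)
  then show ?thesis
    by (simp only: sums_def sum.triangle_reindex)
qed


section \<open>Power series in a contraction\<close>

definition Ser :: "('a::banach \<Rightarrow> 'a) \<Rightarrow> 'a \<Rightarrow> 'a" where
  "Ser C x = (\<Sum>k. cf k *\<^sub>R (C ^^ k) x)"

definition contr :: "('a::complex_normed_vector \<Rightarrow> 'a) \<Rightarrow> bool" where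
  "contr C \<longleftrightarrow> bounded_clinear C \<and> (\<forall>x. norm (C x) \<le> norm x)"

lemma pow_bcl: "bounded_clinear (C::'a::complex_normed_vector\<Rightarrow>'a) \<Longrightarrow> bounded_clinear (C ^^ k)"
  by (induction k) (auto simp: bclinear_id funpow.simps intro: bclinear_compose)

lemma pow_contr: "(\<And>x. norm ((C::'a::real_normed_vector\<Rightarrow>'a) x) \<le> norm x) \<Longrightarrow> norm ((C ^^ k) x) \<le> norm x"
  by (induction k) (auto intro: order_trans simp: funpow.simps)

lemma pow_intertwine:
  assumes "\<And>x. L (C1 x) = C2 (L x)"
  shows "L ((C1 ^^ k) x) = (C2 ^^ k) (L x)"
  by (induction k) (auto simp: assms funpow.simps)

lemma ser_summable_norm:
  fixes C :: "'a::banach \<Rightarrow> 'a"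
  assumes "\<And>x. norm (C x) \<le> norm x"
  shows "summable (\<lambda>k. norm (cf k *\<^sub>R (C ^^ k) x))"
proof (rule summable_comparison_test[where g="\<lambda>k. cf k * norm x"])
  show "\<exists>N. \<forall>n\<ge>N. norm (norm (cf n *\<^sub>R (C ^^ n) x)) \<le> cf n * norm x"
    using pow_contr[OF assms] cf_nonneg by (auto intro!: mult_left_mono)
  show "summable (\<lambda>k. cf k * norm x)" by (intro summable_mult2 cf_summable)
qed

lemma ser_summable:
  fixes C :: "'a::banach \<Rightarrow> 'a"
  assumes "\<And>x. norm (C x) \<le> norm x"
  shows "summable (\<lambda>k. cf k *\<^sub>R (C ^^ k) x)"
  using summable_norm_cancel[OF ser_summable_norm[OF assms]] .

lemma ser_norm:
  fixes C :: "'a::banach \<Rightarrow> 'a"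
  assumes "\<And>x. norm (C x) \<le> norm x"
  shows "norm (Ser C x) \<le> norm x"
proof -
  have "norm (Ser C x) \<le> (\<Sum>k. norm (cf k *\<^sub>R (C ^^ k) x))"
    unfolding Ser_def by (rule summable_norm[OF ser_summable_norm[OF assms]])
  also have "\<dots> \<le> (\<Sum>k. cf k * norm x)"
    using pow_contr[OF assms] cf_nonneg
    by (intro suminf_le ser_summable_norm[OF assms] summable_mult2 cf_summable)
       (auto intro!: mult_left_mono)
  also have "\<dots> = suminf cf * norm x" by (rule suminf_mult2[OF cf_summable, symmetric])
  also have "\<dots> \<le> 1 * norm x" by (intro mult_right_mono cf_suminf_le) auto
  finally show ?thesis by simp
qed

lemma ser_intertwine:
  fixes C1 :: "'a::banach \<Rightarrow> 'a" and C2 :: "'b::banach \<Rightarrow> 'b"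
  assumes L: "bounded_linear L" and c1: "\<And>x. norm (C1 x) \<le> norm x"
    and i: "\<And>x. L (C1 x) = C2 (L x)"
  shows "L (Ser C1 x) = Ser C2 (L x)"
proof -
  have "L (Ser C1 x) = (\<Sum>k. L (cf k *\<^sub>R (C1 ^^ k) x))"
    unfolding Ser_def by (rule bounded_linear.suminf[OF L ser_summable[OF c1]])
  also have "\<dots> = Ser C2 (L x)"
    unfolding Ser_def using linear_scale[OF bounded_linear.linear[OF L]] pow_intertwine[of L C1 C2, OF i] by simp
  finally show ?thesis .
qed

lemma ser_add:
  fixes C :: "'a::{complex_normed_vector,banach} \<Rightarrow> 'a"
  assumes C: "contr C"
  shows "Ser C (x + y) = Ser C x + Ser C y"
proof -
  have c1: "\<And>x. norm (C x) \<le> norm x" using C contr_def by auto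
  have lin: "(C ^^ k) (x + y) = (C ^^ k) x + (C ^^ k) y" for k
    using pow_bcl[of C k] C contr_def bclinear_add by blast
  show ?thesis unfolding Ser_def
    by (simp add: lin scaleR_add_right suminf_add[OF ser_summable[OF c1] ser_summable[OF c1]])
qed

lemma ser_bclinear:
  fixes C :: "'a::{complex_normed_vector,banach} \<Rightarrow> 'a"
  assumes C: "contr C"
  shows "bounded_clinear (Ser C)"
proof -
  have c1: "\<And>x. norm (C x) \<le> norm x" using C contr_def by auto
  have bC: "bounded_clinear C" using C contr_def by auto
  have sR: "Ser C (r *\<^sub>R x) = r *\<^sub>R Ser C x" for r x
    using ser_intertwine[of "\<lambda>x. r *\<^sub>R x" C C x, OF bounded_linear_scaleR_right c1]
      bclinear_scaleR[OF bC] by simp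
  have sC: "Ser C (c *\<^sub>C x) = c *\<^sub>C Ser C x" for c x
    using ser_intertwine[of "\<lambda>x. c *\<^sub>C x" C C x, OF bounded_linear_scaleC c1]
      bclinearD(2)[OF bC] by simp
  have "bounded_linear (Ser C)"
    by (rule bounded_linear_intro[where K=1]) (auto simp: ser_add[OF C] sR ser_norm[OF c1])
  then show ?thesis unfolding bounded_clinear_def using sC by auto
qed

lemma ser_square:
  fixes C :: "'a::{complex_normed_vector,banach} \<Rightarrow> 'a"
  assumes C: "contr C"
  shows "Ser C (Ser C x) = 2 *\<^sub>R Ser C x - C x"
proof -
  have c1: "\<And>x. norm (C x) \<le> norm x" using C contr_def by auto
  have bC: "bounded_clinear C" using C contr_def by auto
  have bl_k: "bounded_linear (C ^^ k)" for k using pow_bcl[OF bC] bclinearD(1) by blast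
  define bl where "bl k = Blinfun (C ^^ k)" for k
  have bl_ap: "blinfun_apply (bl k) = C ^^ k" for k
    unfolding bl_def by (rule bounded_linear_Blinfun_apply[OF bl_k])
  have bl_n: "norm (bl k) \<le> 1" for k
    by (rule norm_blinfun_bound) (auto simp: bl_ap pow_contr[OF c1])
  define A where "A k = cf k *\<^sub>R bl k" for k
  have An: "norm (A k) \<le> cf k" for k
    unfolding A_def using bl_n[of k] cf_nonneg[of k] by (simp add: mult_left_le)
  have Asn: "summable (\<lambda>k. norm (A k))"
    by (rule summable_comparison_test[OF _ cf_summable]) (auto intro: An)
  have As: "summable A" using summable_norm_cancel[OF Asn] .
  have cp: "(\<lambda>n. \<Sum>i\<le>n. A i o\<^sub>L A (n - i)) sums (suminf A o\<^sub>L suminf A)"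
    by (rule Cauchy_product_sums_bilinear[OF bounded_bilinear_blinfun_compose norm_blinfun_compose Asn Asn])
  have trm: "(\<Sum>i\<le>n. A i o\<^sub>L A (n - i)) = (2 * cf n - (if n = 1 then 1 else 0)) *\<^sub>R bl n" for n
  proof -
    have "A i o\<^sub>L A (n - i) = (cf i * cf (n - i)) *\<^sub>R bl n" if "i \<le> n" for i
    proof (rule blinfun_eqI)
      fix y
      have "(C ^^ i) ((C ^^ (n - i)) y) = (C ^^ n) y"
        using that funpow_add[of i "n - i" C] by (simp add: comp_def)
      then show "blinfun_apply (A i o\<^sub>L A (n - i)) y = blinfun_apply ((cf i * cf (n - i)) *\<^sub>R bl n) y"
        unfolding A_def by (simp add: bl_ap blinfun.scaleR_left linear_scale[OF bounded_linear.linear[OF bl_k]])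
    qed
    then have "(\<Sum>i\<le>n. A i o\<^sub>L A (n - i)) = (\<Sum>i\<le>n. (cf i * cf (n - i)) *\<^sub>R bl n)" by simp
    also have "\<dots> = (\<Sum>i\<le>n. cf i * cf (n - i)) *\<^sub>R bl n" by (simp add: scaleR_sum_left)
    finally show ?thesis by (simp add: cf_conv)
  qed
  have s2: "(\<lambda>n. (2 * cf n - (if n = 1 then 1 else 0)) *\<^sub>R bl n) sums (2 *\<^sub>R suminf A - bl 1)"
  proof -
    have "(\<lambda>n. 2 *\<^sub>R A n) sums (2 *\<^sub>R suminf A)"
      using summable_sums[OF As] by (rule sums_scaleR_right)
    moreover have "(\<lambda>n. if n = 1 then bl 1 else 0) sums bl 1" by (rule sums_single)
    ultimately have "(\<lambda>n. 2 *\<^sub>R A n - (if n = 1 then bl 1 else 0)) sums (2 *\<^sub>R suminf A - bl 1)"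
      by (rule sums_diff)
    moreover have "2 *\<^sub>R A n - (if n = 1 then bl 1 else 0) = (2 * cf n - (if n = 1 then 1 else 0)) *\<^sub>R bl n" for n
      unfolding A_def by (simp add: algebra_simps)
    ultimately show ?thesis by simp
  qed
  have eq: "suminf A o\<^sub>L suminf A = 2 *\<^sub>R suminf A - bl 1"
    using sums_unique2[OF cp[unfolded trm] s2] .
  have ap: "blinfun_apply (suminf A) y = Ser C y" for y
  proof -
    have "blinfun_apply (suminf A) y = (\<Sum>k. blinfun_apply (A k) y)"
      by (rule bounded_linear.suminf[OF blinfun.bounded_linear_left As])
    also have "\<dots> = Ser C y" unfolding Ser_def A_def by (simp add: bl_ap blinfun.scaleR_left)
    finally show ?thesis .
  qed
  have "blinfun_apply (suminf A o\<^sub>L suminf A) x = blinfun_apply (2 *\<^sub>R suminf A - bl 1) x"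
    using eq by simp
  then show ?thesis by (simp add: ap bl_ap blinfun.diff_left blinfun.scaleR_left)
qed


lemma contrD: "contr C \<Longrightarrow> norm (C x) \<le> norm x"
  unfolding contr_def by simp

definition sqc :: "real \<Rightarrow> ('a::chilbert_space \<Rightarrow> 'a) \<Rightarrow> 'a \<Rightarrow> 'a" where
  "sqc e T x = (1 / sqrt e) *\<^sub>R (x - Ser (\<lambda>y. y - e *\<^sub>R T y) x)"

definition valid :: "real \<Rightarrow> ('a::chilbert_space \<Rightarrow> 'a) \<Rightarrow> bool" where
  "valid e T \<longleftrightarrow> positive_op T \<and> e > 0 \<and> e * onorm T \<le> 1"

lemma valid_exists: "positive_op T \<Longrightarrow> valid (1 / (onorm T + 1)) T"
proof -
  assume T: "positive_op T"
  have o: "onorm T \<ge> 0" using bclinear_onorm_nonneg positive_opD(1)[OF T] by blast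
  then show ?thesis unfolding valid_def using T by (simp add: field_simps)
qed

lemma valid_common: "positive_op T1 \<Longrightarrow> positive_op T2 \<Longrightarrow>
    valid (1 / (onorm T1 + onorm T2 + 1)) T1 \<and> valid (1 / (onorm T1 + onorm T2 + 1)) T2"
proof -
  assume T1: "positive_op T1" and T2: "positive_op T2"
  have o1: "onorm T1 \<ge> 0" using bclinear_onorm_nonneg positive_opD(1)[OF T1] by blast
  have o2: "onorm T2 \<ge> 0" using bclinear_onorm_nonneg positive_opD(1)[OF T2] by blast
  show ?thesis unfolding valid_def using T1 T2 o1 o2 by (simp add: field_simps)
qed

lemma valid_contr:
  fixes T :: "'a::chilbert_space \<Rightarrow> 'a"
  assumes v: "valid e T"
  shows "contr (\<lambda>y. y - e *\<^sub>R T y)"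
proof -
  have T: "positive_op T" and e: "e > 0" and eo: "e * onorm T \<le> 1" using v valid_def by auto
  have bT: "bounded_clinear T" using positive_opD(1)[OF T] .
  have bc: "bounded_clinear (\<lambda>y. y - e *\<^sub>R T y)"
    by (intro bclinear_diff_fun bclinear_ident bclinear_scaleR_fun bT)
  have "norm (y - e *\<^sub>R T y) \<le> norm y" for y
  proof -
    define q where "q = Re (cinner y (T y))"
    have q0: "q \<ge> 0" unfolding q_def using positive_opD(3)[OF T] .
    have "(norm (y - e *\<^sub>R T y))\<^sup>2 = (norm y)\<^sup>2 + (norm (e *\<^sub>R T y))\<^sup>2 - 2 * Re (cinner y (e *\<^sub>R T y))"
      by (rule norm_diff_sq)
    also have "\<dots> = (norm y)\<^sup>2 + e\<^sup>2 * (norm (T y))\<^sup>2 - 2 * e * q"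
      using e by (simp add: cinner_scaleR_right q_def power_mult_distrib)
    also have "\<dots> \<le> (norm y)\<^sup>2 + e\<^sup>2 * (onorm T * q) - 2 * e * q"
      using pos_norm_bound[OF T, of y] unfolding q_def[symmetric] by (simp add: mult_left_mono)
    also have "\<dots> = (norm y)\<^sup>2 + e * (e * onorm T) * q - 2 * e * q" by (simp add: power2_eq_square)
    also have "\<dots> \<le> (norm y)\<^sup>2 + e * 1 * q - 2 * e * q"
      using eo e q0 by (intro add_right_mono diff_right_mono add_left_mono mult_right_mono mult_left_mono) auto
    also have "\<dots> \<le> (norm y)\<^sup>2" using e q0 by simp
    finally show ?thesis by (rule power2_le_imp_le) simp
  qed
  then show ?thesis unfolding contr_def using bc by auto
qed

lemma sqc_bclinear:
  assumes v: "valid e T"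
  shows "bounded_clinear (sqc e T)"
proof -
  have "bounded_clinear (\<lambda>x. (1 / sqrt e) *\<^sub>R (x - Ser (\<lambda>y. y - e *\<^sub>R T y) x))"
    by (intro bclinear_scaleR_fun bclinear_diff_fun bclinear_ident ser_bclinear valid_contr v)
  then show ?thesis unfolding sqc_def[abs_def] .
qed

lemma sqc_square:
  assumes v: "valid e T"
  shows "sqc e T (sqc e T x) = T x"
proof -
  let ?C = "\<lambda>y. y - e *\<^sub>R T y"
  let ?S = "Ser ?C"
  have e: "e > 0" using v valid_def by auto
  have C: "contr ?C" by (rule valid_contr[OF v])
  have bS: "bounded_clinear ?S" by (rule ser_bclinear[OF C])
  have "sqc e T (sqc e T x) = (1 / sqrt e) *\<^sub>R ((1 / sqrt e) *\<^sub>R (x - ?S x) - ?S ((1 / sqrt e) *\<^sub>R (x - ?S x)))"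
    unfolding sqc_def ..
  also have "\<dots> = (1 / sqrt e * (1 / sqrt e)) *\<^sub>R (x - ?S x - ?S x + ?S (?S x))"
    by (simp add: bclinear_scaleR[OF bS] bclinear_diff[OF bS] algebra_simps)
  also have "\<dots> = (1 / e) *\<^sub>R (x - ?C x)"
  proof -
    have "x - ?S x - ?S x + ?S (?S x) = x - ?C x" by (simp add: ser_square[OF C] scaleR_2)
    moreover have "1 / sqrt e * (1 / sqrt e) = 1 / e" using e by (simp add: real_sqrt_mult[symmetric])
    ultimately show ?thesis by simp
  qed
  also have "\<dots> = T x" using e by simp
  finally show ?thesis .
qed

lemma contr_selfadj:
  assumes v: "valid e T"
  shows "is_adj (\<lambda>y. y - e *\<^sub>R T y) (\<lambda>y. y - e *\<^sub>R T y)"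
proof -
  have T: "positive_op T" using v valid_def by auto
  show ?thesis unfolding is_adj_def
    by (simp add: cinner_diff_left cinner_diff_right cinner_scaleR_left cinner_scaleR_right pos_selfadj[OF T])
qed

lemma pow_selfadj: "is_adj C C \<Longrightarrow> is_adj (C ^^ k) (C ^^ k)"
proof (induction k)
  case 0 then show ?case by (simp add: is_adj_def)
next
  case (Suc k)
  have "is_adj (C \<circ> C ^^ k) (C ^^ k \<circ> C)" by (rule is_adj_comp[OF Suc.prems Suc.IH[OF Suc.prems]])
  then show ?case by (simp add: funpow_swap1 funpow.simps comp_def)
qed

lemma bounded_linear_cinner_right: "bounded_linear (\<lambda>y. cinner (x::'a::complex_inner) y)"
proof (rule bounded_linear_intro[where K="norm x"])
  show "cinner x (y + z) = cinner x y + cinner x z" for y z by (rule cinner_add_right)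
  show "cinner x (r *\<^sub>R y) = r *\<^sub>R cinner x y" for r y by (simp add: cinner_scaleR_right scaleR_conv_of_real)
  show "norm (cinner x y) \<le> norm y * norm x" for y using cinner_CS[of x y] by (simp add: mult.commute)
qed

lemma sqc_pos:
  assumes v: "valid e T"
  shows "positive_op (sqc e T)"
proof -
  let ?C = "\<lambda>y. y - e *\<^sub>R T y"
  have e: "e > 0" using v valid_def by auto
  have C: "contr ?C" by (rule valid_contr[OF v])
  have c1: "\<And>x. norm (?C x) \<le> norm x" by (rule contrD[OF C])
  have sa: "is_adj (?C ^^ k) (?C ^^ k)" for k by (rule pow_selfadj[OF contr_selfadj[OF v]])
  have nn: "nonneg_complex (cinner x (sqc e T x))" for x
  proof -
    define r where "r k = Re (cinner x ((?C ^^ k) x))" for k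
    have im: "cinner x ((?C ^^ k) x) = complex_of_real (r k)" for k
    proof -
      have "cinner x ((?C ^^ k) x) = cinner ((?C ^^ k) x) x" using sa[of k] unfolding is_adj_def by metis
      also have "\<dots> = cnj (cinner x ((?C ^^ k) x))" by (rule cinner_commute)
      finally have "Im (cinner x ((?C ^^ k) x)) = 0" by (simp add: complex_eq_iff)
      then show ?thesis unfolding r_def by (simp add: complex_eq_iff)
    qed
    have rle: "r k \<le> (norm x)\<^sup>2" for k
    proof -
      have "r k \<le> cmod (cinner x ((?C ^^ k) x))" unfolding r_def by (rule complex_Re_le_cmod)
      also have "\<dots> \<le> norm x * norm ((?C ^^ k) x)" by (rule cinner_CS)
      also have "\<dots> \<le> norm x * norm x" by (intro mult_left_mono pow_contr c1) auto
      finally show ?thesis by (simp add: power2_eq_square)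
    qed
    have rabs: "\<bar>r k\<bar> \<le> (norm x)\<^sup>2" for k
    proof -
      have "\<bar>r k\<bar> \<le> cmod (cinner x ((?C ^^ k) x))" unfolding r_def by (rule abs_Re_le_cmod)
      also have "\<dots> \<le> norm x * norm ((?C ^^ k) x)" by (rule cinner_CS)
      also have "\<dots> \<le> norm x * norm x" by (intro mult_left_mono pow_contr c1) auto
      finally show ?thesis by (simp add: power2_eq_square)
    qed
    have sr: "summable (\<lambda>k. cf k * r k)"
    proof (rule summable_comparison_test[where g="\<lambda>k. cf k * (norm x)\<^sup>2"])
      show "\<exists>N. \<forall>n\<ge>N. norm (cf n * r n) \<le> cf n * (norm x)\<^sup>2"
        using rabs cf_nonneg by (auto simp: abs_mult intro!: mult_left_mono)
      show "summable (\<lambda>k. cf k * (norm x)\<^sup>2)" by (intro summable_mult2 cf_summable)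
    qed
    have "cinner x (Ser ?C x) = (\<Sum>k. cinner x (cf k *\<^sub>R (?C ^^ k) x))"
      unfolding Ser_def by (rule bounded_linear.suminf[OF bounded_linear_cinner_right ser_summable[OF c1]])
    also have "\<dots> = (\<Sum>k. complex_of_real (cf k * r k))" by (simp add: cinner_scaleR_right im)
    also have "\<dots> = complex_of_real (\<Sum>k. cf k * r k)" by (rule suminf_of_real[OF sr, symmetric])
    finally have s1: "cinner x (Ser ?C x) = complex_of_real (\<Sum>k. cf k * r k)" .
    have "(\<Sum>k. cf k * r k) \<le> (\<Sum>k. cf k * (norm x)\<^sup>2)"
      using rle cf_nonneg by (intro suminf_le sr summable_mult2 cf_summable) (auto intro: mult_left_mono)
    also have "\<dots> = suminf cf * (norm x)\<^sup>2" by (rule suminf_mult2[OF cf_summable, symmetric])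
    also have "\<dots> \<le> 1 * (norm x)\<^sup>2" by (intro mult_right_mono cf_suminf_le) auto
    finally have s2: "(\<Sum>k. cf k * r k) \<le> (norm x)\<^sup>2" by simp
    have "cinner x (sqc e T x) = complex_of_real ((1 / sqrt e) * ((norm x)\<^sup>2 - (\<Sum>k. cf k * r k)))"
      unfolding sqc_def by (simp add: cinner_scaleR_right cinner_diff_right s1 cinner_self_real)
    then show ?thesis unfolding nonneg_complex_def using s2 e by simp
  qed
  show ?thesis unfolding positive_op_def using sqc_bclinear[OF v] nn by auto
qed

lemma sqc_intertwine:
  fixes L :: "'a::chilbert_space \<Rightarrow> 'b::chilbert_space"
  assumes v1: "valid e T1" and v2: "valid e T2" and L: "bounded_linear L"
    and i: "\<And>x. L (T1 x) = T2 (L x)"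
  shows "L (sqc e T1 x) = sqc e T2 (L x)"
proof -
  let ?C1 = "\<lambda>y. y - e *\<^sub>R T1 y" and ?C2 = "\<lambda>y. y - e *\<^sub>R T2 y"
  have c1: "\<And>x. norm (?C1 x) \<le> norm x" by (rule contrD[OF valid_contr[OF v1]])
  have lin: "L (a - b) = L a - L b" "L (r *\<^sub>R a) = r *\<^sub>R L a" for a b r
    using L by (auto simp: linear_diff linear_scale bounded_linear.linear)
  have ic: "L (?C1 y) = ?C2 (L y)" for y by (simp add: lin i)
  show ?thesis unfolding sqc_def using ser_intertwine[of L ?C1 ?C2 x, OF L c1 ic] by (simp add: lin)
qed

lemma sqc_unique:
  fixes T :: "'a::chilbert_space \<Rightarrow> 'a"
  assumes v: "valid e T" and B: "positive_op B" and BB: "\<And>x. B (B x) = T x"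
  shows "B = sqc e T"
proof
  fix x
  let ?R = "sqc e T"
  have R: "positive_op ?R" by (rule sqc_pos[OF v])
  have bB: "bounded_clinear B" using positive_opD(1)[OF B] .
  have bR: "bounded_clinear ?R" using positive_opD(1)[OF R] .
  have vB: "valid e T" using v .
  have comm: "B (?R z) = ?R (B z)" for z
    by (rule sqc_intertwine[OF v v bclinearD(1)[OF bB]]) (simp add: BB[symmetric])
  define y where "y = ?R x - B x"
  have "?R y + B y = 0"
    unfolding y_def by (simp add: bclinear_diff[OF bB] bclinear_diff[OF bR] sqc_square[OF v] BB comm)
  then have "cinner y (?R y) + cinner y (B y) = 0" by (metis cinner_add_right cinner_zero_right)
  then have "Re (cinner y (?R y)) + Re (cinner y (B y)) = 0" by (metis plus_complex.sel(1) zero_complex.sel(1))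
  moreover have "Re (cinner y (?R y)) \<ge> 0" "Re (cinner y (B y)) \<ge> 0"
    using positive_opD(3)[OF R] positive_opD(3)[OF B] by auto
  ultimately have "Re (cinner y (?R y)) = 0" "Re (cinner y (B y)) = 0" by auto
  then have Ry: "?R y = 0" and By: "B y = 0" using pos_zero[OF R] pos_zero[OF B] by auto
  have "cinner y y = cinner (?R x) y - cinner (B x) y" unfolding y_def by (simp add: cinner_diff_left)
  also have "\<dots> = cinner x (?R y) - cinner x (B y)" by (simp add: pos_selfadj[OF R] pos_selfadj[OF B])
  also have "\<dots> = 0" by (simp add: Ry By)
  finally have "y = 0" using cinner_eq_zero_iff by blast
  then show "B x = ?R x" unfolding y_def by simp
qed

lemma op_sqrt_eq:
  assumes v: "valid e T"
  shows "op_sqrt T = sqc e T"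
  unfolding op_sqrt_def
proof (rule the_equality)
  show "positive_op (sqc e T) \<and> sqc e T \<circ> sqc e T = T"
    using sqc_pos[OF v] sqc_square[OF v] by auto
  show "\<And>R. positive_op R \<and> R \<circ> R = T \<Longrightarrow> R = sqc e T"
    using sqc_unique[OF v] by (metis comp_apply)
qed

lemma op_sqrt_pos: "positive_op T \<Longrightarrow> positive_op (op_sqrt (T::'a::chilbert_space \<Rightarrow> 'a))"
  using op_sqrt_eq[OF valid_exists] sqc_pos[OF valid_exists] by metis

lemma op_sqrt_sq: "positive_op T \<Longrightarrow> op_sqrt T (op_sqrt T x) = (T::'a::chilbert_space \<Rightarrow> 'a) x"
  using op_sqrt_eq[OF valid_exists] sqc_square[OF valid_exists] by metis

lemma op_sqrt_unique:
  "positive_op (T::'a::chilbert_space \<Rightarrow> 'a) \<Longrightarrow> positive_op R \<Longrightarrow> (\<And>x. R (R x) = T x) \<Longrightarrow> op_sqrt T = R"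
  using op_sqrt_eq[OF valid_exists] sqc_unique[OF valid_exists] by metis

lemma op_sqrt_intertwine:
  fixes L :: "'a::chilbert_space \<Rightarrow> 'b::chilbert_space"
  assumes T1: "positive_op T1" and T2: "positive_op T2" and L: "bounded_linear L"
    and i: "\<And>x. L (T1 x) = T2 (L x)"
  shows "L (op_sqrt T1 x) = op_sqrt T2 (L x)"
proof -
  define e where "e = 1 / (onorm T1 + onorm T2 + 1)"
  have v1: "valid e T1" and v2: "valid e T2" using valid_common[OF T1 T2] e_def by auto
  show ?thesis using sqc_intertwine[OF v1 v2 L i] op_sqrt_eq[OF v1] op_sqrt_eq[OF v2] by simp
qed


lemma bounded_bilinear_cinner: "bounded_bilinear (cinner :: 'a::complex_inner \<Rightarrow> 'a \<Rightarrow> complex)"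
proof (rule bounded_bilinear.intro)
  show "cinner (a + a') b = cinner a b + cinner a' b" for a a' b :: 'a by (rule cinner_add_left)
  show "cinner a (b + b') = cinner a b + cinner a b'" for a b b' :: 'a by (rule cinner_add_right)
  show "cinner (r *\<^sub>R a) b = r *\<^sub>R cinner a b" for r and a b :: 'a
    by (simp add: cinner_scaleR_left scaleR_conv_of_real)
  show "cinner a (r *\<^sub>R b) = r *\<^sub>R cinner a b" for r and a b :: 'a
    by (simp add: cinner_scaleR_right scaleR_conv_of_real)
  show "\<exists>K. \<forall>a b :: 'a. norm (cinner a b) \<le> norm a * norm b * K"
    by (rule exI[of _ 1]) (simp add: cinner_CS)
qed

lemma norm_iso:
  assumes "\<forall>u v. cinner (J u) (J v) = cinner u v"
  shows "norm (J u) = norm u"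
  using assms norm_eq_sqrt_cinner by metis

lemma vanish_closure_cspan:
  fixes F :: "'a::complex_normed_vector \<Rightarrow> complex"
  assumes add: "\<And>x y. F (x + y) = F x + F y" and sc: "\<And>c x. F (c *\<^sub>C x) = c * F x"
    and cont: "continuous_on UNIV F" and van: "\<And>g. g \<in> G \<Longrightarrow> F g = 0"
    and x: "x \<in> closure (cspan G)"
  shows "F x = 0"
proof -
  have F0: "F 0 = 0" using add[of 0 0] by simp
  have Fsum: "F (sum f A) = (\<Sum>a\<in>A. F (f a))" for f and A :: "'b set"
    by (induction A rule: infinite_finite_induct) (auto simp: F0 add)
  have "cspan G \<subseteq> {x. F x = 0}"
  proof
    fix y assume "y \<in> cspan G"
    then obtain S c where "finite S" "S \<subseteq> G" "y = (\<Sum>v\<in>S. c v *\<^sub>C v)" unfolding cspan_def by auto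
    then show "y \<in> {x. F x = 0}" by (auto simp: Fsum sc intro!: sum.neutral van)
  qed
  moreover have "closed {x. F x = 0}"
  proof -
    have "\<And>x. isCont F x" using cont by (simp add: continuous_on_eq_continuous_within)
    from continuous_closed_vimage[OF closed_singleton[of 0] this] show ?thesis by (simp add: vimage_def)
  qed
  ultimately have "closure (cspan G) \<subseteq> {x. F x = 0}" by (rule closure_minimal)
  then show ?thesis using x by auto
qed

lemma pos_scale: "positive_op R \<Longrightarrow> r \<ge> 0 \<Longrightarrow> positive_op (\<lambda>u. r *\<^sub>R R u)"
  unfolding positive_op_def nonneg_complex_def
  by (auto intro: bclinear_scaleR_fun simp: cinner_scaleR_right)

lemma op_sqrt_id: "op_sqrt (id :: 'a::chilbert_space \<Rightarrow> 'a) = id"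
  by (rule op_sqrt_unique[OF positive_id positive_id]) simp

lemma op_sqrt_scale:
  fixes T :: "'a::chilbert_space \<Rightarrow> 'a"
  assumes T: "positive_op T" and r: "r \<ge> 0"
  shows "op_sqrt (\<lambda>u. r *\<^sub>R T u) = (\<lambda>u. sqrt r *\<^sub>R op_sqrt T u)"
proof (rule op_sqrt_unique[OF pos_scale[OF T r] pos_scale[OF op_sqrt_pos[OF T]]])
  show "0 \<le> sqrt r" using r by simp
  have b: "bounded_clinear (op_sqrt T)" using positive_opD(1)[OF op_sqrt_pos[OF T]] .
  show "sqrt r *\<^sub>R op_sqrt T (sqrt r *\<^sub>R op_sqrt T x) = r *\<^sub>R T x" for x
    using r by (simp add: bclinear_scaleR[OF b] op_sqrt_sq[OF T])
qed

lemma sesq_expand: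
  fixes S :: "'a::complex_inner \<Rightarrow> 'a"
  assumes S: "bounded_clinear S" and F: "finite F"
    and e: "\<And>v u. v \<in> F \<Longrightarrow> u \<in> F \<Longrightarrow> cinner (a v) (S (a u)) = cinner (b v) (b u)"
  shows "cinner (\<Sum>v\<in>F. c v *\<^sub>C a v) (S (\<Sum>u\<in>F. c u *\<^sub>C a u))
       = cinner (\<Sum>v\<in>F. c v *\<^sub>C b v) (\<Sum>u\<in>F. c u *\<^sub>C b u)"
proof -
  have "cinner (\<Sum>v\<in>F. c v *\<^sub>C a v) (S (\<Sum>u\<in>F. c u *\<^sub>C a u))
      = (\<Sum>u\<in>F. \<Sum>v\<in>F. c u * (cnj (c v) * cinner (a v) (S (a u))))"
    by (simp add: bclinear_sum[OF S] bclinearD(2)[OF S] cinner_sum_left cinner_sum_right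
        cinner_scaleC_left cinner_scaleC_right sum_distrib_left mult.assoc)
  also have "\<dots> = (\<Sum>u\<in>F. \<Sum>v\<in>F. c u * (cnj (c v) * cinner (b v) (b u)))"
    by (intro sum.cong refl) (simp add: e)
  also have "\<dots> = cinner (\<Sum>v\<in>F. c v *\<^sub>C b v) (\<Sum>u\<in>F. c u *\<^sub>C b u)"
    by (simp add: cinner_sum_left cinner_sum_right cinner_scaleC_left cinner_scaleC_right
        sum_distrib_left mult.assoc)
  finally show ?thesis .
qed


theorem lemma2p12:
  fixes act :: "'x::{complex_normed_vector,complete_space} \<Rightarrow> 'a::cstar_algebra \<Rightarrow> 'x"
    and ip :: "'x \<Rightarrow> 'x \<Rightarrow> 'a"
    and Phi :: "'x \<Rightarrow> 'h::chilbert_space \<Rightarrow> 'k::chilbert_space"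
    and \<phi> :: "'a \<Rightarrow> 'h \<Rightarrow> 'h"
    and \<pi>\<phi> :: "'a \<Rightarrow> 'hp::chilbert_space \<Rightarrow> 'hp"
    and V :: "'h \<Rightarrow> 'hp"
    and J :: "'kp::chilbert_space \<Rightarrow> 'k"
    and W :: "'k \<Rightarrow> 'kp"
    and \<pi>Phi :: "'x \<Rightarrow> 'hp \<Rightarrow> 'kp"
  assumes X: "hilbert_module act ip" and full: "full_module ip"
    and Phi_bdd: "\<forall>x. bounded_clinear (Phi x)"
    and \<phi>_cp: "cp_map \<phi>"
    and Phi_cp: "\<forall>x y. cadj (Phi x) \<circ> Phi y = \<phi> (ip x y)"
    \<comment> \<open>Stinespring construction of \<open>\<phi>\<close>\<close>
    and \<pi>\<phi>_rep: "star_rep \<pi>\<phi>"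
    and V_bdd: "bounded_clinear V"
    and \<phi>_dil: "\<forall>a. \<phi> a = cadj V \<circ> \<pi>\<phi> a \<circ> V"
    and minimal: "closure (cspan {\<pi>\<phi> a (V h) | a h. True}) = UNIV"
    \<comment> \<open>\<open>K_\<Phi> = [\<Phi>(X)H] \<subseteq> K\<close>, realised as the range of the isometric inclusion \<open>J\<close>\<close>
    and J_bdd: "bounded_clinear J"
    and J_isometry: "\<forall>u v. cinner (J u) (J v) = cinner u v"
    and J_range: "range J = closure (cspan {Phi x h | x h. True})"
    \<comment> \<open>\<open>\<pi>_\<Phi>\<close>: representation with underlying \<open>\<pi>_\<phi>\<close>, \<open>\<pi>_\<Phi>(x)\<pi>_\<phi>(a)V h = \<Phi>(xa)h\<close>\<close>
    and \<pi>Phi_rep: "module_rep ip \<pi>Phi \<pi>\<phi>"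
    and \<pi>Phi_def: "\<forall>x a h. J (\<pi>Phi x (\<pi>\<phi> a (V h))) = Phi (act x a) h"
    \<comment> \<open>\<open>W_\<Phi> k = p_{K_\<Phi>} k\<close>\<close>
    and W_def: "\<forall>k. is_orth_proj (range J) k (J (W k))"
  shows
    "Phi_op W V \<pi>Phi id id = Phi
     \<and> (\<forall>T S (r::real). in_commutant \<pi>Phi T S \<and> positive_op T \<and> positive_op S \<and> r > 0 \<longrightarrow>
          Phi_op W V \<pi>Phi (\<lambda>u. r *\<^sub>R T u) (\<lambda>u. r *\<^sub>R S u)
            = (\<lambda>x h. r *\<^sub>R Phi_op W V \<pi>Phi T S x h))
     \<and> (\<forall>T1 S1 T2 S2. in_commutant \<pi>Phi T1 S1 \<and> in_commutant \<pi>Phi T2 S2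
          \<and> positive_op T1 \<and> op_le T1 T2 \<longrightarrow>
          (\<forall>x. op_le (cadj (Phi_op W V \<pi>Phi (op_sqrt T1) (op_sqrt S1) x) \<circ> Phi_op W V \<pi>Phi (op_sqrt T1) (op_sqrt S1) x)
                     (cadj (Phi_op W V \<pi>Phi (op_sqrt T2) (op_sqrt S2) x) \<circ> Phi_op W V \<pi>Phi (op_sqrt T2) (op_sqrt S2) x)))"

proof -
  have ip_act0: "\<forall>x y a. ip x (act y a) = ip x y * a"
    using X unfolding hilbert_module_def by (elim conjE) assumption
  have ip_act: "ip x (act y a) = ip x y * a" for x y a using ip_act0 by blast
  have star: "\<And>a. bounded_clinear (\<pi>\<phi> a)" "\<And>a b. \<pi>\<phi> (a * b) = \<pi>\<phi> a \<circ> \<pi>\<phi> b"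
    using \<pi>\<phi>_rep unfolding star_rep_def by auto
  have b\<pi>: "\<And>x. bounded_clinear (\<pi>Phi x)" using \<pi>Phi_rep unfolding module_rep_def by auto
  have rep: "\<And>x y. cadj (\<pi>Phi x) \<circ> \<pi>Phi y = \<pi>\<phi> (ip x y)" using \<pi>Phi_rep unfolding module_rep_def by auto
  have bJ: "bounded_clinear J" by (rule J_bdd)
  have bV: "bounded_clinear V" by (rule V_bdd)
  have bPhi: "\<And>x. bounded_clinear (Phi x)" using Phi_bdd by auto
  have adjWJ: "is_adj W J" unfolding is_adj_def
  proof (intro allI)
    fix k u
    have "cinner (J u) (k - J (W k)) = 0" using W_def unfolding is_orth_proj_def by auto
    then have "cinner (J u) k = cinner (J u) (J (W k))" by (simp add: cinner_diff_right)
    then have "cinner k (J u) = cinner (J (W k)) (J u)" by (metis cinner_commute)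
    then show "cinner (W k) u = cinner k (J u)" using J_isometry by simp
  qed
  have cadjW: "cadj W = J" by (rule cadj_eq[OF adjWJ])
  have adjJW: "is_adj J W" by (rule is_adj_sym[OF adjWJ])
  have WJ: "W (J u) = u" for u
  proof (rule cinner_eq_all_left)
    fix z show "cinner z (W (J u)) = cinner z u"
      using adjJW J_isometry unfolding is_adj_def by metis
  qed
  have ip\<pi>: "cinner (\<pi>Phi x u) (\<pi>Phi y v) = cinner u (\<pi>\<phi> (ip x y) v)" for x y u v
    using cadj_ip[OF b\<pi>, of x u "\<pi>Phi y v"] rep[of x y] by (metis comp_apply)
  have ipPhi: "cinner (Phi x h) (Phi y k) = cinner (V h) (\<pi>\<phi> (ip x y) (V k))" for x y h k
  proof -
    have "cinner (Phi x h) (Phi y k) = cinner h (cadj (Phi x) (Phi y k))" by (rule cadj_ip[OF bPhi])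
    also have "\<dots> = cinner h (\<phi> (ip x y) k)" using Phi_cp by (metis comp_apply)
    also have "\<dots> = cinner h (cadj V (\<pi>\<phi> (ip x y) (V k)))" using \<phi>_dil by simp
    also have "\<dots> = cinner (V h) (\<pi>\<phi> (ip x y) (V k))" by (rule cadj_ip[OF bV, symmetric])
    finally show ?thesis .
  qed
  have core: "J (\<pi>Phi x (V h)) = Phi x h" for x h
  proof -
    let ?F = "\<lambda>u. cinner (Phi x h) (J (\<pi>Phi x u)) - cinner (V h) (\<pi>\<phi> (ip x x) u)"
    have bl1: "bounded_clinear (\<lambda>u. J (\<pi>Phi x u))" by (rule bclinear_compose'[OF bJ b\<pi>])
    have F0: "?F (V h) = 0"
    proof (rule vanish_closure_cspan[where G="{\<pi>\<phi> a (V h) | a h. True}" and F="?F"])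
      show "?F (u + v) = ?F u + ?F v" for u v
        by (simp add: bclinear_add[OF bl1] bclinear_add[OF star(1)] cinner_add_right)
      show "?F (c *\<^sub>C u) = c * ?F u" for c u
        by (simp add: bclinearD(2)[OF bl1] bclinearD(2)[OF star(1)] cinner_scaleC_right algebra_simps)
      show "continuous_on UNIV ?F"
      proof -
        have "bounded_linear (\<lambda>u. cinner (Phi x h) (J (\<pi>Phi x u)))"
          using bounded_linear_compose[OF bounded_linear_cinner_right bclinearD(1)[OF bl1]] by simp
        moreover have "bounded_linear (\<lambda>u. cinner (V h) (\<pi>\<phi> (ip x x) u))"
          using bounded_linear_compose[OF bounded_linear_cinner_right bclinearD(1)[OF star(1)]] by simp
        ultimately have "bounded_linear ?F" by (rule bounded_linear_sub)
        then show ?thesis by (rule linear_continuous_on)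
      qed
      show "?F g = 0" if gG: "g \<in> {\<pi>\<phi> a (V h) | a h. True}" for g
      proof -
        obtain a k where g: "g = \<pi>\<phi> a (V k)" using gG by auto
        have "cinner (Phi x h) (J (\<pi>Phi x g)) = cinner (Phi x h) (Phi (act x a) k)"
          using \<pi>Phi_def g by simp
        also have "\<dots> = cinner (V h) (\<pi>\<phi> (ip x x * a) (V k))" by (simp add: ipPhi ip_act)
        also have "\<dots> = cinner (V h) (\<pi>\<phi> (ip x x) g)" using star(2) g by simp
        finally show ?thesis by simp
      qed
      show "V h \<in> closure (cspan {\<pi>\<phi> a (V h) | a h. True})" using minimal by simp
    qed
    let ?P = "Phi x h" and ?Q = "J (\<pi>Phi x (V h))"
    let ?c = "cinner (V h) (\<pi>\<phi> (ip x x) (V h))"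
    have cPP: "cinner ?P ?P = ?c" by (rule ipPhi)
    have cQQ: "cinner ?Q ?Q = ?c" using J_isometry ip\<pi> by simp
    have cPQ: "cinner ?P ?Q = ?c" using F0 by simp
    have cQP: "cinner ?Q ?P = ?c"
    proof -
      have "cinner ?Q ?P = cnj (cinner ?P ?Q)" by (rule cinner_commute)
      also have "\<dots> = cnj (cinner ?Q ?Q)" using cPQ cQQ by simp
      also have "\<dots> = cinner ?Q ?Q" by (rule cinner_commute[symmetric])
      finally show ?thesis using cQQ by simp
    qed
    have "cinner (?P - ?Q) (?P - ?Q) = 0"
      by (simp add: cinner_diff_left cinner_diff_right cPP cQQ cPQ cQP)
    then have "?P - ?Q = 0" using cinner_eq_zero_iff by blast
    then show ?thesis by simp
  qed
  have part1: "Phi_op W V \<pi>Phi id id = Phi"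
    unfolding Phi_op_def op_sqrt_id cadjW by (intro ext) (simp add: core)
  have part2: "\<forall>T S (r::real). in_commutant \<pi>Phi T S \<and> positive_op T \<and> positive_op S \<and> r > 0 \<longrightarrow>
          Phi_op W V \<pi>Phi (\<lambda>u. r *\<^sub>R T u) (\<lambda>u. r *\<^sub>R S u)
            = (\<lambda>x h. r *\<^sub>R Phi_op W V \<pi>Phi T S x h)"
  proof (intro allI impI)
    fix T S and r :: real
    assume H: "in_commutant \<pi>Phi T S \<and> positive_op T \<and> positive_op S \<and> r > 0"
    then have T: "positive_op T" and S: "positive_op S" and r: "r > 0" by auto
    have bT: "bounded_clinear (op_sqrt T)" using positive_opD(1)[OF op_sqrt_pos[OF T]] .
    have bS: "bounded_clinear (op_sqrt S)" using positive_opD(1)[OF op_sqrt_pos[OF S]] .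
    have rr: "sqrt r * sqrt r = r" using r by simp
    show "Phi_op W V \<pi>Phi (\<lambda>u. r *\<^sub>R T u) (\<lambda>u. r *\<^sub>R S u) = (\<lambda>x h. r *\<^sub>R Phi_op W V \<pi>Phi T S x h)"
      unfolding Phi_op_def op_sqrt_scale[OF T less_imp_le[OF r]] op_sqrt_scale[OF S less_imp_le[OF r]] cadjW
      by (intro ext) (simp add: bclinear_scaleR[OF bJ] bclinear_scaleR[OF bS] bclinear_scaleR[OF b\<pi>] rr abs_of_pos[OF r])
  qed
  let ?G = "{\<pi>Phi x (V h) | x h. True}"
  have dense: "w \<in> closure (cspan ?G)" for w
  proof -
    have Jinj: "inj J"
    proof (rule injI)
      fix u v assume "J u = J v"
      then have "J (u - v) = 0" by (simp add: bclinear_diff[OF bJ])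
      then have "cinner (u - v) (u - v) = 0" using J_isometry by (metis cinner_zero_left)
      then have "u - v = 0" using cinner_eq_zero_iff by blast
      then show "u = v" by simp
    qed
    have sub: "cspan {Phi x h | x h. True} \<subseteq> J ` cspan ?G"
    proof
      fix y assume "y \<in> cspan {Phi x h | x h. True}"
      then obtain F c where F: "finite F" "F \<subseteq> {Phi x h | x h. True}" "y = (\<Sum>v\<in>F. c v *\<^sub>C v)"
        unfolding cspan_def by auto
      define F' where "F' = {g \<in> ?G. J g \<in> F}"
      have JF': "J ` F' = F"
      proof
        show "J ` F' \<subseteq> F" unfolding F'_def by auto
        show "F \<subseteq> J ` F'"
        proof
          fix v assume "v \<in> F"
          then obtain x h where "v = Phi x h" using F(2) by auto
          then have "v = J (\<pi>Phi x (V h))" by (simp add: core)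
          then show "v \<in> J ` F'" unfolding F'_def using \<open>v \<in> F\<close> by auto
        qed
      qed
      have fin: "finite F'"
        using finite_vimageI[OF F(1) Jinj] unfolding F'_def by (rule rev_finite_subset) auto
      have "y = (\<Sum>g\<in>F'. c (J g) *\<^sub>C J g)"
        using F(3) JF' sum.reindex[OF inj_on_subset[OF Jinj subset_UNIV, of F'], of "\<lambda>v. c v *\<^sub>C v"]
        by (simp add: comp_def)
      also have "\<dots> = J (\<Sum>g\<in>F'. c (J g) *\<^sub>C g)" by (simp add: bclinear_sum[OF bJ] bclinearD(2)[OF bJ])
      finally have "y = J (\<Sum>g\<in>F'. c (J g) *\<^sub>C g)" .
      moreover have "(\<Sum>g\<in>F'. c (J g) *\<^sub>C g) \<in> cspan ?G"
        unfolding cspan_def using fin by (auto simp: F'_def)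
      ultimately show "y \<in> J ` cspan ?G" by blast
    qed
    have "J w \<in> range J" by simp
    then have "J w \<in> closure (cspan {Phi x h | x h. True})" using J_range by simp
    then have "J w \<in> closure (J ` cspan ?G)" using closure_mono[OF sub] by blast
    then obtain s where s: "\<And>n. s n \<in> J ` cspan ?G" "s \<longlonglongrightarrow> J w" using closure_sequential by blast
    have "\<forall>n. \<exists>t. t \<in> cspan ?G \<and> s n = J t" using s(1) by blast
    from choice[OF this] obtain t where t0: "\<forall>n. t n \<in> cspan ?G \<and> s n = J (t n)" by blast
    then have t: "\<And>n. t n \<in> cspan ?G" "\<And>n. s n = J (t n)" by auto
    have "t \<longlonglongrightarrow> w"
    proof -
      have sJ: "s = (\<lambda>n. J (t n))" using t(2) by (intro ext) simp
      have "(\<lambda>n. J (t n)) \<longlonglongrightarrow> J w" using s(2) unfolding sJ .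
      then have "(\<lambda>n. norm (J (t n) - J w)) \<longlonglongrightarrow> 0" by (intro tendsto_norm_zero LIM_zero)
      moreover have "norm (J (t n) - J w) = norm (t n - w)" for n
        using norm_iso[OF J_isometry] by (simp add: bclinear_diff[OF bJ, symmetric])
      ultimately have "(\<lambda>n. norm (t n - w)) \<longlonglongrightarrow> 0" by simp
      then show ?thesis by (simp add: tendsto_norm_zero_iff LIM_zero_cancel)
    qed
    then show ?thesis using t(1) closure_sequential by blast
  qed
  have commD: "\<pi>Phi y (T v) = S (\<pi>Phi y v) \<and> cadj (\<pi>Phi x) (S k) = T (cadj (\<pi>Phi x) k)"
    if C: "in_commutant \<pi>Phi T S" for T S x y v k
  proof -
    have a: "\<forall>x. \<pi>Phi x \<circ> T = S \<circ> \<pi>Phi x \<and> cadj (\<pi>Phi x) \<circ> S = T \<circ> cadj (\<pi>Phi x)"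
      using C unfolding in_commutant_def by (elim conjE) assumption
    then have "\<pi>Phi y \<circ> T = S \<circ> \<pi>Phi y" "cadj (\<pi>Phi x) \<circ> S = T \<circ> cadj (\<pi>Phi x)" by auto
    then show ?thesis by (metis comp_apply)
  qed
  have comm: "T (\<pi>\<phi> (ip x y) u) = \<pi>\<phi> (ip x y) (T u)" if C: "in_commutant \<pi>Phi T S" for T S x y u
  proof -
    have c1: "\<pi>Phi y (T v) = S (\<pi>Phi y v)" for v using commD[OF C] by blast
    have c2: "cadj (\<pi>Phi x) (S k) = T (cadj (\<pi>Phi x) k)" for k using commD[OF C] by blast
    have "T (\<pi>\<phi> (ip x y) u) = T (cadj (\<pi>Phi x) (\<pi>Phi y u))" using rep[of x y] by (metis comp_apply)
    also have "\<dots> = cadj (\<pi>Phi x) (\<pi>Phi y (T u))" by (simp add: c1 c2)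
    also have "\<dots> = \<pi>\<phi> (ip x y) (T u)" using rep[of x y] by (metis comp_apply)
    finally show ?thesis .
  qed
  have Spos: "positive_op S" if C: "in_commutant \<pi>Phi T S" and T: "positive_op T" for T S
  proof -
    let ?R = "op_sqrt T"
    have R: "positive_op ?R" by (rule op_sqrt_pos[OF T])
    have bS: "bounded_clinear S" using C unfolding in_commutant_def by (elim conjE) assumption
    have c1: "\<pi>Phi y (T v) = S (\<pi>Phi y v)" for y v using commD[OF C] by blast
    have commR: "?R (\<pi>\<phi> (ip x y) u) = \<pi>\<phi> (ip x y) (?R u)" for x y u
      by (rule op_sqrt_intertwine[OF T T bclinearD(1)[OF star(1)], symmetric]) (rule comm[OF C, symmetric])
    have gen: "cinner (\<pi>Phi x1 (V h1)) (S (\<pi>Phi x2 (V h2))) = cinner (\<pi>Phi x1 (?R (V h1))) (\<pi>Phi x2 (?R (V h2)))"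
      for x1 h1 x2 h2
    proof -
      have "cinner (\<pi>Phi x1 (V h1)) (S (\<pi>Phi x2 (V h2))) = cinner (V h1) (\<pi>\<phi> (ip x1 x2) (T (V h2)))"
        by (simp add: c1[symmetric] ip\<pi>)
      also have "\<dots> = cinner (V h1) (\<pi>\<phi> (ip x1 x2) (?R (?R (V h2))))" by (simp add: op_sqrt_sq[OF T])
      also have "\<dots> = cinner (V h1) (?R (\<pi>\<phi> (ip x1 x2) (?R (V h2))))" by (simp add: commR)
      also have "\<dots> = cinner (?R (V h1)) (\<pi>\<phi> (ip x1 x2) (?R (V h2)))" by (simp add: pos_selfadj[OF R])
      also have "\<dots> = cinner (\<pi>Phi x1 (?R (V h1))) (\<pi>Phi x2 (?R (V h2)))" by (simp add: ip\<pi>)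
      finally show ?thesis .
    qed
    define X where "X v = (SOME p. v = \<pi>Phi (fst p) (V (snd p)))" for v
    have Xv: "v = \<pi>Phi (fst (X v)) (V (snd (X v)))" if vG: "v \<in> ?G" for v
    proof -
      from vG obtain x h where "v = \<pi>Phi x (V h)" by auto
      then have "\<exists>p. v = \<pi>Phi (fst p) (V (snd p))" by (intro exI[of _ "(x, h)"]) simp
      then show ?thesis unfolding X_def by (rule someI_ex)
    qed
    let ?q = "\<lambda>w. cinner w (S w)"
    have qspan: "nonneg_complex (?q w)" if wG: "w \<in> cspan ?G" for w
    proof -
      obtain F c where F: "finite F" "F \<subseteq> ?G" "w = (\<Sum>v\<in>F. c v *\<^sub>C v)" using wG unfolding cspan_def by auto
      let ?b = "\<lambda>v. \<pi>Phi (fst (X v)) (?R (V (snd (X v))))"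
      have "?q w = cinner (\<Sum>v\<in>F. c v *\<^sub>C ?b v) (\<Sum>v\<in>F. c v *\<^sub>C ?b v)"
        unfolding F(3)
      proof (rule sesq_expand[OF bS F(1)])
        fix v u assume "v \<in> F" "u \<in> F"
        then have vG': "v \<in> ?G" and uG': "u \<in> ?G" using F(2) by auto
        have ev: "v = \<pi>Phi (fst (X v)) (V (snd (X v)))" by (rule Xv[OF vG'])
        have eu: "u = \<pi>Phi (fst (X u)) (V (snd (X u)))" by (rule Xv[OF uG'])
        have "cinner v (S u) = cinner (\<pi>Phi (fst (X v)) (V (snd (X v)))) (S (\<pi>Phi (fst (X u)) (V (snd (X u)))))"
          by (rule arg_cong2[where f="\<lambda>a b. cinner a (S b)", OF ev eu])
        then show "cinner v (S u) = cinner (?b v) (?b u)" by (simp only: gen)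
      qed
      then show ?thesis unfolding nonneg_complex_def by (simp add: cinner_self_real)
    qed
    have "nonneg_complex (?q w)" for w
    proof -
      obtain s where s: "\<And>n. s n \<in> cspan ?G" "s \<longlonglongrightarrow> w" using dense[of w] closure_sequential by blast
      have lim: "(\<lambda>n. ?q (s n)) \<longlonglongrightarrow> ?q w"
        by (rule bounded_bilinear.tendsto[OF bounded_bilinear_cinner s(2) bclinear_tendsto[OF bS s(2)]])
      have qs: "Im (?q (s n)) = 0 \<and> 0 \<le> Re (?q (s n))" for n
        using qspan[OF s(1)[of n]] unfolding nonneg_complex_def .
      have imz: "Im (?q (s n)) = 0" for n using qs by blast
      have "(\<lambda>n. Im (?q (s n))) \<longlonglongrightarrow> Im (?q w)" by (rule tendsto_Im[OF lim])
      then have "(\<lambda>n. 0::real) \<longlonglongrightarrow> Im (?q w)" by (simp only: imz)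
      then have "0 = Im (?q w)" by (rule LIMSEQ_unique[OF tendsto_const])
      then have i: "Im (?q w) = 0" by simp
      have r: "0 \<le> Re (?q w)"
        by (rule LIMSEQ_le_const[OF tendsto_Re[OF lim]]) (use qs in blast)
      show ?thesis unfolding nonneg_complex_def using i r by simp
    qed
    then show ?thesis unfolding positive_op_def using bS by auto
  qed
  have key: "cadj (Phi_op W V \<pi>Phi (op_sqrt T) (op_sqrt S) x) \<circ> Phi_op W V \<pi>Phi (op_sqrt T) (op_sqrt S) x
       = (\<lambda>h. cadj V (\<pi>\<phi> (ip x x) (T (V h))))"
    if C: "in_commutant \<pi>Phi T S" and T: "positive_op T" for T S x
  proof -
    have S: "positive_op S" by (rule Spos[OF C T])
    let ?R = "op_sqrt T" and ?P = "op_sqrt (op_sqrt T)" and ?Q = "op_sqrt (op_sqrt S)"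
    have R: "positive_op ?R" by (rule op_sqrt_pos[OF T])
    have P: "positive_op ?P" by (rule op_sqrt_pos[OF R])
    have RS: "positive_op (op_sqrt S)" by (rule op_sqrt_pos[OF S])
    have Q: "positive_op ?Q" by (rule op_sqrt_pos[OF RS])
    have c1: "\<pi>Phi y (T v) = S (\<pi>Phi y v)" for y v using commD[OF C] by blast
    have inter: "\<pi>Phi x (?R u) = op_sqrt S (\<pi>Phi x u)" for u
      by (rule op_sqrt_intertwine[OF T S bclinearD(1)[OF b\<pi>]]) (rule c1)
    have commR: "?R (\<pi>\<phi> (ip x x) u) = \<pi>\<phi> (ip x x) (?R u)" for u
      by (rule op_sqrt_intertwine[OF T T bclinearD(1)[OF star(1)], symmetric]) (rule comm[OF C, symmetric])
    have commP: "?P (\<pi>\<phi> (ip x x) u) = \<pi>\<phi> (ip x x) (?P u)" for u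
      by (rule op_sqrt_intertwine[OF R R bclinearD(1)[OF star(1)], symmetric]) (rule commR[symmetric])
    let ?F = "Phi_op W V \<pi>Phi (op_sqrt T) (op_sqrt S) x"
    let ?Gf = "\<lambda>k. cadj V (?P (cadj (\<pi>Phi x) (?Q (W k))))"
    have F: "?F = (\<lambda>h. J (?Q (\<pi>Phi x (?P (V h)))))" unfolding Phi_op_def cadjW by (simp add: comp_def)
    have adj: "is_adj ?F ?Gf" unfolding is_adj_def F
    proof (intro allI)
      fix h k
      have "cinner (J (?Q (\<pi>Phi x (?P (V h))))) k = cinner (?Q (\<pi>Phi x (?P (V h)))) (W k)"
        using adjJW unfolding is_adj_def by blast
      also have "\<dots> = cinner (\<pi>Phi x (?P (V h))) (?Q (W k))" by (rule pos_selfadj[OF Q])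
      also have "\<dots> = cinner (?P (V h)) (cadj (\<pi>Phi x) (?Q (W k)))" by (rule cadj_ip[OF b\<pi>])
      also have "\<dots> = cinner (V h) (?P (cadj (\<pi>Phi x) (?Q (W k))))" by (rule pos_selfadj[OF P])
      also have "\<dots> = cinner h (?Gf k)" by (rule cadj_ip[OF bV])
      finally show "cinner (J (?Q (\<pi>Phi x (?P (V h))))) k = cinner h (?Gf k)" .
    qed
    have "cadj ?F = ?Gf" by (rule cadj_eq[OF adj])
    then have "cadj ?F \<circ> ?F = (\<lambda>h. ?Gf (J (?Q (\<pi>Phi x (?P (V h))))))" by (simp add: F comp_def)
    also have "\<dots> = (\<lambda>h. cadj V (\<pi>\<phi> (ip x x) (T (V h))))"
    proof (rule ext)
      fix h
      have "?Gf (J (?Q (\<pi>Phi x (?P (V h))))) = cadj V (?P (cadj (\<pi>Phi x) (op_sqrt S (\<pi>Phi x (?P (V h))))))"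
        by (simp add: WJ op_sqrt_sq[OF RS])
      also have "\<dots> = cadj V (?P (cadj (\<pi>Phi x) (\<pi>Phi x (?R (?P (V h))))))" by (simp add: inter)
      also have "\<dots> = cadj V (?P (\<pi>\<phi> (ip x x) (?R (?P (V h)))))" using rep[of x x] by (metis comp_apply)
      also have "\<dots> = cadj V (\<pi>\<phi> (ip x x) (?P (?R (?P (V h)))))" by (simp add: commP)
      also have "\<dots> = cadj V (\<pi>\<phi> (ip x x) (T (V h)))"
      proof -
        have "?R (?P y) = ?P (?R y)" for y by (simp add: op_sqrt_sq[OF R, symmetric])
        then have "?P (?R (?P y)) = ?R (?R y)" for y by (simp add: op_sqrt_sq[OF R])
        then show ?thesis by (simp add: op_sqrt_sq[OF T])
      qed
      finally show "?Gf (J (?Q (\<pi>Phi x (?P (V h))))) = cadj V (\<pi>\<phi> (ip x x) (T (V h)))" .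
    qed
    finally show ?thesis .
  qed
  have part3: "\<forall>T1 S1 T2 S2. in_commutant \<pi>Phi T1 S1 \<and> in_commutant \<pi>Phi T2 S2
          \<and> positive_op T1 \<and> op_le T1 T2 \<longrightarrow>
          (\<forall>x. op_le (cadj (Phi_op W V \<pi>Phi (op_sqrt T1) (op_sqrt S1) x) \<circ> Phi_op W V \<pi>Phi (op_sqrt T1) (op_sqrt S1) x)
                     (cadj (Phi_op W V \<pi>Phi (op_sqrt T2) (op_sqrt S2) x) \<circ> Phi_op W V \<pi>Phi (op_sqrt T2) (op_sqrt S2) x))"
  proof (intro allI impI)
    fix T1 S1 T2 S2 x
    assume H: "in_commutant \<pi>Phi T1 S1 \<and> in_commutant \<pi>Phi T2 S2 \<and> positive_op T1 \<and> op_le T1 T2"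
    then have C1: "in_commutant \<pi>Phi T1 S1" and C2: "in_commutant \<pi>Phi T2 S2"
      and T1: "positive_op T1" and le: "op_le T1 T2" by auto
    have bT2: "bounded_clinear T2" and D: "positive_op (\<lambda>u. T2 u - T1 u)" using le unfolding op_le_def by auto
    have bT1: "bounded_clinear T1" using positive_opD(1)[OF T1] .
    have T2: "positive_op T2"
    proof -
      have "T2 u = T1 u + (T2 u - T1 u)" for u by simp
      then have "cinner u (T2 u) = cinner u (T1 u) + cinner u (T2 u - T1 u)" for u
        by (metis cinner_add_right)
      then show ?thesis unfolding positive_op_def nonneg_complex_def using bT2
          positive_opD(2,3)[OF T1] positive_opD(2,3)[OF D] by simp
    qed
    let ?M = "\<lambda>T h. cadj V (\<pi>\<phi> (ip x x) (T (V h)))"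
    have bM: "bounded_clinear (?M T)" if "bounded_clinear T" for T
      by (rule bclinear_compose'[OF cadj_bclinear[OF bV] bclinear_compose'[OF star(1) bclinear_compose'[OF that bV]]])
    have "op_le (?M T1) (?M T2)"
      unfolding op_le_def
    proof (intro conjI)
      show "bounded_clinear (?M T1)" "bounded_clinear (?M T2)" using bM bT1 bT2 by auto
      let ?D = "\<lambda>u. T2 u - T1 u"
      let ?E = "op_sqrt ?D"
      have E: "positive_op ?E" by (rule op_sqrt_pos[OF D])
      have commD: "?D (\<pi>\<phi> (ip x x) u) = \<pi>\<phi> (ip x x) (?D u)" for u
        by (simp add: comm[OF C1] comm[OF C2] bclinear_diff[OF star(1)])
      have commE: "?E (\<pi>\<phi> (ip x x) u) = \<pi>\<phi> (ip x x) (?E u)" for u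
        by (rule op_sqrt_intertwine[OF D D bclinearD(1)[OF star(1)], symmetric]) (rule commD[symmetric])
      have bcV: "bounded_clinear (cadj V)" by (rule cadj_bclinear[OF bV])
      have "nonneg_complex (cinner h (?M T2 h - ?M T1 h))" for h
      proof -
        have "cinner h (?M T2 h - ?M T1 h) = cinner h (cadj V (\<pi>\<phi> (ip x x) (?D (V h))))"
          by (simp add: bclinear_diff[OF bcV] bclinear_diff[OF star(1)])
        also have "\<dots> = cinner (V h) (\<pi>\<phi> (ip x x) (?D (V h)))" by (rule cadj_ip[OF bV, symmetric])
        also have "\<dots> = cinner (V h) (\<pi>\<phi> (ip x x) (?E (?E (V h))))" by (simp add: op_sqrt_sq[OF D])
        also have "\<dots> = cinner (?E (V h)) (\<pi>\<phi> (ip x x) (?E (V h)))"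
          by (simp add: commE[symmetric] pos_selfadj[OF E])
        also have "\<dots> = cinner (\<pi>Phi x (?E (V h))) (\<pi>Phi x (?E (V h)))" by (simp add: ip\<pi>)
        finally show ?thesis unfolding nonneg_complex_def by (simp add: cinner_self_real)
      qed
      then show "positive_op (\<lambda>h. ?M T2 h - ?M T1 h)"
        unfolding positive_op_def using bclinear_diff_fun[OF bM[OF bT2] bM[OF bT1]] by auto
    qed
    then show "op_le (cadj (Phi_op W V \<pi>Phi (op_sqrt T1) (op_sqrt S1) x) \<circ> Phi_op W V \<pi>Phi (op_sqrt T1) (op_sqrt S1) x)
                     (cadj (Phi_op W V \<pi>Phi (op_sqrt T2) (op_sqrt S2) x) \<circ> Phi_op W V \<pi>Phi (op_sqrt T2) (op_sqrt S2) x)"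
      by (simp only: key[OF C1 T1] key[OF C2 T2])
  qed
  show ?thesis using part1 part2 part3 by blast
qed

end
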